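(* Let ${}_{\mathfrak Y}\mathfrak B_{\mathfrak X}$ be a left-fibrant graph of bisets, and let $\dagger$ be a vertex of $\mathfrak Y$ and $*$ a vertex of $\mathfrak X$. Then the natural map \[\bigsqcup_{z\in\rho^{-1}( * )}\pi_1(\mathfrak Y,\dagger,\lambda(z))\otimes_{G_{\lambda(z)}}B_z\longrightarrow\pi_1(\mathfrak B,\dagger,* ),\qquad q\otimes b\mapsto q\otimes b\otimes 1,\] is a bijection (an isomorphism of left $\pi_1(\mathfrak Y,\dagger)$-sets); thus $\pi_1(\mathfrak B,\dagger,* )$ is described by the left-hand side, with the right action of $\pi_1(\mathfrak X,* )$ given by lifting of paths.
   Context: Graphs and graphs of groups. A graph is a set $\mathfrak X=V\sqcup E$ with maps $x\mapsto x^-$, $x\mapsto\bar x$ such that $\bar{\bar x}=x$, $x^-\in V$, and $x=x^-\iff x=\bar x\iff x\in V$; set $x^+=(\bar x)^-$. A graph morphism commutes with $\bar{\ }$ and $^-$ (it may send edges to vertices); it is simplicial if it sends edges to edges. A graph of groups is a connected graph with a group $G_x$ for each $x$ and homomorphisms $g\mapsto g^-\colon G_x\to G_{x^-}$, $g\mapsto\bar g\colon G_x\to G_{\bar x}$, such that $G_x\to G_{\bar x}\to G_x$ is the identity and both maps are the identity when $x\in V$; $g^+=(\bar g)^-$. Its fundamental groupoid $\pi_1(\mathfrak X)$ has object set $V$ and is generated by the $x\in\mathfrak X$ (morphisms from $x^-$ to $x^+$) and the elements of the $G_v$, subject to the relations of the $G_v$, $v=1\in G_v$, $x\bar x=1$,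 $g^-x=xg^+$ ($g\in G_x$). $\pi_1(\mathfrak X,v,w)$ is the set of morphisms from $v$ to $w$; $\pi_1(\mathfrak X,v)=\pi_1(\mathfrak X,v,v)$. Graphs of bisets. A congruence of bisets with respect to homomorphisms $\psi,\phi$ is a map $\beta$ with $(hbg)^\beta=h^\psi b^\beta g^\phi$. For graphs of groups $\mathfrak Y,\mathfrak X$, a $\mathfrak Y$-$\mathfrak X$ graph of bisets is a (not necessarily connected) graph $\mathfrak B$ with graph morphisms $\lambda\colon\mathfrak B\to\mathfrak Y$, $\rho\colon\mathfrak B\to\mathfrak X$, a $G_{\lambda(z)}$-$G_{\rho(z)}$-biset $B_z$ for each $z$, and maps $b\mapsto b^-\colon B_z\to B_{z^-}$, $b\mapsto\bar b\colon B_z\to B_{\bar z}$ that are congruences w.r.t. the corresponding group homomorphisms, with $B_z\to B_{\bar z}\to B_z$ the identity and both maps the identity for vertices; $b^+=(\bar b)^-$. The fundamental biset $\pi_1(\mathfrak B,\dagger,* )$ is the $\pi_1(\mathfrak Y,\dagger)$-$\pi_1(\mathfrak X,* )$-biset $\bigsqcup_{z\in V(\mathfrak B)}\pi_1(\mathfrak Y,\dagger,\lambda(z))\otimes_{G_{\lambda(z)}}B_z\otimes_{G_{\rho(z)}}\pi_1(\mathfrak X,\rho(z),* )$ modulo $q\otimes b^-\otimes p=q\lambda(z)\otimes b^+\otimes\overline{\rho(z)}p$ for edges $z\in\mathfrak B$, $b\in B_z$, $q\in\pi_1(\mathfrak Y,\dagger,\lambda(z)^-)$, $p\in\pi_1(\mathfrak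 X,\rho(z)^-,* )$ ($\lambda(z),\overline{\rho(z)}$ read as groupoid morphisms, trivial if vertices). Left-fibrant: $\rho$ is simplicial, and for every vertex $v\in\mathfrak B$ and every edge $f\in\mathfrak X$ with $f^-=\rho(v)$ the map $\bigsqcup_{e\in\rho^{-1}(f),\,e^-=v}G_{\lambda(v)}\otimes_{G_{\lambda(e)}}B_e\to B_v$, $g\otimes b\mapsto gb^-$, is an isomorphism of $G_{\lambda(v)}$-$G_f$-bisets ($G_{\lambda(e)}$ acting on $G_{\lambda(v)}$ through $G_{\lambda(e)}\to G_{\lambda(e)^-}=G_{\lambda(v)}$, and $G_f$ acting on $B_v$ through $G_f\to G_{\rho(v)}$). *)

theory Defs
  imports "HOL-Algebra.Group"
begin

section \<open>Graphs (Serre style)\<close>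

text \<open>A graph is a set V \<union> E (vertices and edges, disjoint) with an involution
  grev (x \<mapsto> x bar) and an origin map gorg (x \<mapsto> x^-).\<close>

record 'v dgraph =
  gverts :: "'v set"
  gedges :: "'v set"
  grev   :: "'v \<Rightarrow> 'v"
  gorg   :: "'v \<Rightarrow> 'v"

definition carr :: "('v,'a) dgraph_scheme \<Rightarrow> 'v set" where
  "carr G = gverts G \<union> gedges G"

definition tgt :: "('v,'a) dgraph_scheme \<Rightarrow> 'v \<Rightarrow> 'v" where
  "tgt G x = gorg G (grev G x)"

definition is_graph :: "('v,'a) dgraph_scheme \<Rightarrow> bool" where
  "is_graph G \<longleftrightarrow> gverts G \<inter> gedges G = {} \<and>
     (\<forall>x\<in>carr G. grev G x \<in> carr G \<and> grev G (grev G x) = x \<and> gorg G x \<in> gverts G \<and>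
        (x \<in> gverts G \<longleftrightarrow> grev G x = x) \<and> (x \<in> gverts G \<longleftrightarrow> gorg G x = x))"

definition connected_graph :: "('v,'a) dgraph_scheme \<Rightarrow> bool" where
  "connected_graph G \<longleftrightarrow> gverts G \<noteq> {} \<and>
     (\<forall>v\<in>gverts G. \<forall>w\<in>gverts G. (v, w) \<in> {(gorg G e, tgt G e) | e. e \<in> gedges G}\<^sup>*)"

definition graph_mor :: "('u,'a) dgraph_scheme \<Rightarrow> ('v,'b) dgraph_scheme \<Rightarrow> ('u \<Rightarrow> 'v) \<Rightarrow> bool" where
  "graph_mor B Y f \<longleftrightarrow> (\<forall>z\<in>carr B. f z \<in> carr Y \<and> f (grev B z) = grev Y (f z) \<and>
                                       f (gorg B z) = gorg Y (f z))"

text \<open>grp G x is the group G_x; hm G x is g \<mapsto> g^- : G_x \<rightarrow> G_{x^-};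
  hb G x is g \<mapsto> g bar : G_x \<rightarrow> G_{x bar}.\<close>

record ('v,'g) gog = "'v dgraph" +
  grp :: "'v \<Rightarrow> 'g monoid"
  hm  :: "'v \<Rightarrow> 'g \<Rightarrow> 'g"
  hb  :: "'v \<Rightarrow> 'g \<Rightarrow> 'g"

definition is_gog :: "('v,'g) gog \<Rightarrow> bool" where
  "is_gog G \<longleftrightarrow> is_graph G \<and> connected_graph G \<and>
     (\<forall>x\<in>carr G. group (grp G x) \<and>
        hm G x \<in> hom (grp G x) (grp G (gorg G x)) \<and>
        hb G x \<in> hom (grp G x) (grp G (grev G x)) \<and>
        (\<forall>g\<in>carrier (grp G x). hb G (grev G x) (hb G x g) = g)) \<and>
     (\<forall>v\<in>gverts G. \<forall>g\<in>carrier (grp G v). hm G v g = g \<and> hb G v g = g)"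

section \<open>Fundamental groupoid, presented by words\<close>

text \<open>Letters: LE x for an edge x (a morphism x^- \<rightarrow> x^+), LG v g for g \<in> G_v.
  The generators x \<in> V are omitted, since the relation v = 1 \<in> G_v identifies
  them with the identity (here: the relation LG v 1 = empty word).\<close>

datatype ('v,'g) letter = LE 'v | LG 'v 'g

inductive wpath :: "('v,'g) gog \<Rightarrow> 'v \<Rightarrow> 'v \<Rightarrow> ('v,'g) letter list \<Rightarrow> bool"
  for G :: "('v,'g) gog" where
  wnil: "v \<in> gverts G \<Longrightarrow> wpath G v v []"
| wedge: "x \<in> gedges G \<Longrightarrow> wpath G (tgt G x) w p \<Longrightarrow> wpath G (gorg G x) w (LE x # p)"
| welt: "v \<in> gverts G \<Longrightarrow> g \<in> carrier (grp G v) \<Longrightarrow> wpath G v w p \<Longrightarrow> wpath G v w (LG v g # p)"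

text \<open>peq G v w p q: the words p, q (paths from v to w) represent the same
  morphism of the fundamental groupoid \<pi>_1(G, v, w).\<close>

inductive peq :: "('v,'g) gog \<Rightarrow> 'v \<Rightarrow> 'v \<Rightarrow> ('v,'g) letter list \<Rightarrow> ('v,'g) letter list \<Rightarrow> bool"
  for G :: "('v,'g) gog" where
  prefl: "wpath G v w p \<Longrightarrow> peq G v w p p"
| psym: "peq G v w p q \<Longrightarrow> peq G v w q p"
| ptrans: "peq G v w p q \<Longrightarrow> peq G v w q r \<Longrightarrow> peq G v w p r"
| pctx: "peq G a b l r \<Longrightarrow> wpath G v a u \<Longrightarrow> wpath G b w s \<Longrightarrow> peq G v w (u @ l @ s) (u @ r @ s)"
| pmult: "v \<in> gverts G \<Longrightarrow> g \<in> carrier (grp G v) \<Longrightarrow> h \<in> carrier (grp G v) \<Longrightarrow>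
          peq G v v [LG v g, LG v h] [LG v (g \<otimes>\<^bsub>grp G v\<^esub> h)]"
| pone: "v \<in> gverts G \<Longrightarrow> peq G v v [LG v \<one>\<^bsub>grp G v\<^esub>] []"
| pinv: "x \<in> gedges G \<Longrightarrow> peq G (gorg G x) (gorg G x) [LE x, LE (grev G x)] []"
| pconj: "x \<in> gedges G \<Longrightarrow> g \<in> carrier (grp G x) \<Longrightarrow>
          peq G (gorg G x) (tgt G x) [LG (gorg G x) (hm G x g), LE x]
                                     [LE x, LG (tgt G x) (hm G (grev G x) (hb G x g))]"

definition mor :: "('v,'g) gog \<Rightarrow> 'v \<Rightarrow> ('v,'g) letter list" where
  "mor G x = (if x \<in> gedges G then [LE x] else [])"

inductive_set eqc :: "'a set \<Rightarrow> ('a \<times> 'a) set \<Rightarrow> ('a \<times> 'a) set" for A R where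
  eqc_base: "(x, y) \<in> R \<Longrightarrow> x \<in> A \<Longrightarrow> y \<in> A \<Longrightarrow> (x, y) \<in> eqc A R"
| eqc_refl: "x \<in> A \<Longrightarrow> (x, x) \<in> eqc A R"
| eqc_sym: "(x, y) \<in> eqc A R \<Longrightarrow> (y, x) \<in> eqc A R"
| eqc_trans: "(x, y) \<in> eqc A R \<Longrightarrow> (y, z) \<in> eqc A R \<Longrightarrow> (x, z) \<in> eqc A R"

text \<open>lam, rho: the graph morphisms to Y and X; bs z = B_z; lact z g b = g b
  (g \<in> G_{lam z}); ract z b h = b h (h \<in> G_{rho z}); bm z b = b^-; bb z b = b bar.\<close>

record ('z,'y,'x,'g,'h,'b) gobs = "'z dgraph" +
  lam  :: "'z \<Rightarrow> 'y"
  rho  :: "'z \<Rightarrow> 'x"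
  bs   :: "'z \<Rightarrow> 'b set"
  lact :: "'z \<Rightarrow> 'g \<Rightarrow> 'b \<Rightarrow> 'b"
  ract :: "'z \<Rightarrow> 'b \<Rightarrow> 'h \<Rightarrow> 'b"
  bm   :: "'z \<Rightarrow> 'b \<Rightarrow> 'b"
  bb   :: "'z \<Rightarrow> 'b \<Rightarrow> 'b"

definition is_biset :: "'g monoid \<Rightarrow> 'h monoid \<Rightarrow> 'b set \<Rightarrow> ('g \<Rightarrow> 'b \<Rightarrow> 'b) \<Rightarrow> ('b \<Rightarrow> 'h \<Rightarrow> 'b) \<Rightarrow> bool" where
  "is_biset GL GR S l r \<longleftrightarrow>
     (\<forall>g\<in>carrier GL. \<forall>b\<in>S. l g b \<in> S) \<and> (\<forall>h\<in>carrier GR. \<forall>b\<in>S. r b h \<in> S) \<and>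
     (\<forall>b\<in>S. l \<one>\<^bsub>GL\<^esub> b = b \<and> r b \<one>\<^bsub>GR\<^esub> = b) \<and>
     (\<forall>g\<in>carrier GL. \<forall>g'\<in>carrier GL. \<forall>b\<in>S. l (g \<otimes>\<^bsub>GL\<^esub> g') b = l g (l g' b)) \<and>
     (\<forall>h\<in>carrier GR. \<forall>h'\<in>carrier GR. \<forall>b\<in>S. r b (h \<otimes>\<^bsub>GR\<^esub> h') = r (r b h) h') \<and>
     (\<forall>g\<in>carrier GL. \<forall>h\<in>carrier GR. \<forall>b\<in>S. l g (r b h) = r (l g b) h)"

definition is_gobs :: "('y,'g) gog \<Rightarrow> ('x,'h) gog \<Rightarrow> ('z,'y,'x,'g,'h,'b) gobs \<Rightarrow> bool" where
  "is_gobs Y X B \<longleftrightarrow> is_graph B \<and> graph_mor B Y (lam B) \<and> graph_mor B X (rho B) \<and>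
     (\<forall>z\<in>carr B.
        is_biset (grp Y (lam B z)) (grp X (rho B z)) (bs B z) (lact B z) (ract B z) \<and>
        (\<forall>b\<in>bs B z. bm B z b \<in> bs B (gorg B z) \<and>
           (\<forall>g\<in>carrier (grp Y (lam B z)). \<forall>h\<in>carrier (grp X (rho B z)).
              bm B z (lact B z g (ract B z b h)) =
              lact B (gorg B z) (hm Y (lam B z) g) (ract B (gorg B z) (bm B z b) (hm X (rho B z) h)))) \<and>
        (\<forall>b\<in>bs B z. bb B z b \<in> bs B (grev B z) \<and>
           (\<forall>g\<in>carrier (grp Y (lam B z)). \<forall>h\<in>carrier (grp X (rho B z)).
              bb B z (lact B z g (ract B z b h)) =
              lact B (grev B z) (hb Y (lam B z) g) (ract B (grev B z) (bb B z b) (hb X (rho B z) h)))) \<and>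
        (\<forall>b\<in>bs B z. bb B (grev B z) (bb B z b) = b)) \<and>
     (\<forall>v\<in>gverts B. \<forall>b\<in>bs B v. bm B v b = b \<and> bb B v b = b)"

text \<open>Domain and relation of the disjoint union over e \<in> rho^-1(f), e^- = v, of
  G_{lam v} \<otimes>_{G_{lam e}} B_e.\<close>

definition fib_dom :: "('y,'g) gog \<Rightarrow> ('z,'y,'x,'g,'h,'b) gobs \<Rightarrow> 'z \<Rightarrow> 'x \<Rightarrow> ('z \<times> 'g \<times> 'b) set" where
  "fib_dom Y B v f = {(e, g, b). e \<in> gedges B \<and> rho B e = f \<and> gorg B e = v \<and>
                                  g \<in> carrier (grp Y (lam B v)) \<and> b \<in> bs B e}"

definition fib_rel :: "('y,'g) gog \<Rightarrow> ('z,'y,'x,'g,'h,'b) gobs \<Rightarrow> 'z \<Rightarrow> 'x \<Rightarrow> (('z \<times> 'g \<times> 'b) \<times> ('z \<times> 'g \<times> 'b)) set" where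
  "fib_rel Y B v f = eqc (fib_dom Y B v f)
     {((e, g \<otimes>\<^bsub>grp Y (lam B v)\<^esub> hm Y (lam B e) k, b), (e, g, lact B e k b)) | e g b k.
        k \<in> carrier (grp Y (lam B e))}"

definition left_fibrant :: "('y,'g) gog \<Rightarrow> ('x,'h) gog \<Rightarrow> ('z,'y,'x,'g,'h,'b) gobs \<Rightarrow> bool" where
  "left_fibrant Y X B \<longleftrightarrow>
     (\<forall>z\<in>gedges B. rho B z \<in> gedges X) \<and>
     (\<forall>v\<in>gverts B. \<forall>f\<in>gedges X. gorg X f = rho B v \<longrightarrow>
        bij_betw (\<lambda>C. the_elem ((\<lambda>(e, g, b). lact B v g (bm B e b)) ` C))
                 (fib_dom Y B v f // fib_rel Y B v f) (bs B v))"

text \<open>Representatives (z, q, b, p) of q \<otimes> b \<otimes> p in \<pi>_1(B, dag, st).\<close>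

definition bis_dom :: "('y,'g) gog \<Rightarrow> ('x,'h) gog \<Rightarrow> ('z,'y,'x,'g,'h,'b) gobs \<Rightarrow> 'y \<Rightarrow> 'x \<Rightarrow>
    ('z \<times> ('y,'g) letter list \<times> 'b \<times> ('x,'h) letter list) set" where
  "bis_dom Y X B dag st = {(z, q, b, p). z \<in> gverts B \<and> wpath Y dag (lam B z) q \<and> b \<in> bs B z \<and>
                                         wpath X (rho B z) st p}"

definition bis_rel :: "('y,'g) gog \<Rightarrow> ('x,'h) gog \<Rightarrow> ('z,'y,'x,'g,'h,'b) gobs \<Rightarrow> 'y \<Rightarrow> 'x \<Rightarrow>
    (('z \<times> ('y,'g) letter list \<times> 'b \<times> ('x,'h) letter list) \<times>
     ('z \<times> ('y,'g) letter list \<times> 'b \<times> ('x,'h) letter list)) set" where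
  "bis_rel Y X B dag st = eqc (bis_dom Y X B dag st)
     ({((z, q, b, p), (z, q', b, p)) | z q q' b p. peq Y dag (lam B z) q q'} \<union>
      {((z, q, b, p), (z, q, b, p')) | z q b p p'. peq X (rho B z) st p p'} \<union>
      {((z, q @ [LG (lam B z) g], b, p), (z, q, lact B z g b, p)) | z q g b p.
          g \<in> carrier (grp Y (lam B z))} \<union>
      {((z, q, ract B z b h, p), (z, q, b, LG (rho B z) h # p)) | z q b h p.
          h \<in> carrier (grp X (rho B z))} \<union>
      {((gorg B z, q, bm B z b, p),
        (tgt B z, q @ mor Y (lam B z), bm B (grev B z) (bb B z b), mor X (grev X (rho B z)) @ p))
         | z q b p. z \<in> gedges B \<and> b \<in> bs B z \<and>
             wpath Y dag (gorg Y (lam B z)) q \<and> wpath X (gorg X (rho B z)) st p})"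

definition pi1B where
  "pi1B Y X B dag st = bis_dom Y X B dag st // bis_rel Y X B dag st"

text \<open>Representatives (z, q, b) of q \<otimes> b in the disjoint union over z \<in> rho^-1(st)
  of \<pi>_1(Y, dag, lam z) \<otimes>_{G_{lam z}} B_z.\<close>

definition lhs_dom :: "('y,'g) gog \<Rightarrow> ('x,'h) gog \<Rightarrow> ('z,'y,'x,'g,'h,'b) gobs \<Rightarrow> 'y \<Rightarrow> 'x \<Rightarrow>
    ('z \<times> ('y,'g) letter list \<times> 'b) set" where
  "lhs_dom Y X B dag st = {(z, q, b). z \<in> gverts B \<and> rho B z = st \<and> wpath Y dag (lam B z) q \<and> b \<in> bs B z}"

definition lhs_rel :: "('y,'g) gog \<Rightarrow> ('x,'h) gog \<Rightarrow> ('z,'y,'x,'g,'h,'b) gobs \<Rightarrow> 'y \<Rightarrow> 'x \<Rightarrow>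
    (('z \<times> ('y,'g) letter list \<times> 'b) \<times> ('z \<times> ('y,'g) letter list \<times> 'b)) set" where
  "lhs_rel Y X B dag st = eqc (lhs_dom Y X B dag st)
     ({((z, q, b), (z, q', b)) | z q q' b. peq Y dag (lam B z) q q'} \<union>
      {((z, q @ [LG (lam B z) g], b), (z, q, lact B z g b)) | z q g b.
          g \<in> carrier (grp Y (lam B z))})"

definition lhs_set where
  "lhs_set Y X B dag st = lhs_dom Y X B dag st // lhs_rel Y X B dag st"

definition natmap where
  "natmap Y X B dag st C = bis_rel Y X B dag st `` ((\<lambda>(z, q, b). (z, q, b, [])) ` C)"

text \<open>Left actions of \<pi>_1(Y, dag) (represented by a loop word r) on classes.\<close>
definition lhs_act where
  "lhs_act Y X B dag st r C = lhs_rel Y X B dag st `` ((\<lambda>(z, q, b). (z, r @ q, b)) ` C)"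

definition bis_act where
  "bis_act Y X B dag st r C = bis_rel Y X B dag st `` ((\<lambda>(z, q, b, p). (z, r @ q, b, p)) ` C)"

end

theory Submission
  imports Defs
begin

lemma eqc_mem: "(x, y) \<in> eqc A R \<Longrightarrow> x \<in> A \<and> y \<in> A"
  by (induction rule: eqc.induct) auto

lemma eqc_equiv: "equiv A (eqc A R)"
proof (rule equivI)
  show "eqc A R \<subseteq> A \<times> A" by (auto dest: eqc_mem)
  show "refl_on A (eqc A R)" unfolding refl_on_def by (auto intro: eqc.eqc_refl)
  show "sym (eqc A R)" unfolding sym_def by (auto intro: eqc.eqc_sym)
  show "trans (eqc A R)" unfolding trans_def by (blast intro: eqc.eqc_trans)
qed

lemma eqc_map:
  assumes "(x, y) \<in> eqc A R" "\<And>a. a \<in> A \<Longrightarrow> f a \<in> A'"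
    "\<And>a b. (a, b) \<in> R \<Longrightarrow> a \<in> A \<Longrightarrow> b \<in> A \<Longrightarrow> (f a, f b) \<in> eqc A' R'"
  shows "(f x, f y) \<in> eqc A' R'"
  using assms(1)
proof (induction rule: eqc.induct)
  case (eqc_base x y) then show ?case by (rule assms(3))
next
  case (eqc_refl x) then show ?case by (intro eqc.eqc_refl assms(2))
next
  case (eqc_sym x y) from eqc_sym.IH show ?case by (rule eqc.eqc_sym)
next
  case (eqc_trans x y z) from eqc_trans.IH show ?case by (rule eqc.eqc_trans)
qed

lemma eqc_inv:
  assumes "(x, y) \<in> eqc A R"
    "\<And>a b. (a, b) \<in> R \<Longrightarrow> a \<in> A \<Longrightarrow> b \<in> A \<Longrightarrow> F a = F b"
  shows "F x = F y"
  using assms(1) by (induction rule: eqc.induct) (simp_all add: assms(2))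

lemma class_image:
  assumes "equiv A R" "equiv A' R'" "x \<in> A" "f x \<in> A'"
    "\<And>a b. (a, b) \<in> R \<Longrightarrow> (f a, f b) \<in> R'"
  shows "R' `` (f ` (R `` {x})) = R' `` {f x}"
proof
  show "R' `` (f ` (R `` {x})) \<subseteq> R' `` {f x}"
  proof
    fix y assume "y \<in> R' `` (f ` (R `` {x}))"
    then obtain a where "(x, a) \<in> R" "(f a, y) \<in> R'" by auto
    then have "(f x, f a) \<in> R'" using assms(5) by blast
    with \<open>(f a, y) \<in> R'\<close> show "y \<in> R' `` {f x}"
      using assms(2) unfolding equiv_def trans_def by blast
  qed
  have "x \<in> R `` {x}" using assms(1,3) by (rule equiv_class_self)
  then show "R' `` {f x} \<subseteq> R' `` (f ` (R `` {x}))" by blast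
qed

lemma graph_ax:
  assumes "is_graph G" "x \<in> carr G"
  shows "grev G x \<in> carr G \<and> grev G (grev G x) = x \<and> gorg G x \<in> gverts G \<and>
        (x \<in> gverts G \<longleftrightarrow> grev G x = x) \<and> (x \<in> gverts G \<longleftrightarrow> gorg G x = x)"
proof -
  have "\<forall>x\<in>carr G. grev G x \<in> carr G \<and> grev G (grev G x) = x \<and> gorg G x \<in> gverts G \<and>
        (x \<in> gverts G \<longleftrightarrow> grev G x = x) \<and> (x \<in> gverts G \<longleftrightarrow> gorg G x = x)"
    using assms(1) unfolding is_graph_def by (rule conjunct2)
  then show ?thesis using assms(2) by (rule bspec)
qed

lemma graph_disj: "is_graph G \<Longrightarrow> gverts G \<inter> gedges G = {}"
  unfolding is_graph_def by (rule conjunct1)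

lemma vert_carr: "v \<in> gverts G \<Longrightarrow> v \<in> carr G"
  unfolding carr_def by (rule UnI1)
lemma edge_carr: "v \<in> gedges G \<Longrightarrow> v \<in> carr G"
  unfolding carr_def by (rule UnI2)

lemma graph_carr:
  assumes "is_graph G" "x \<in> carr G"
  shows "grev G x \<in> carr G" "grev G (grev G x) = x" "gorg G x \<in> gverts G" "tgt G x \<in> gverts G"
    "tgt G (grev G x) = gorg G x"
proof -
  note a = graph_ax[OF assms]
  show "grev G x \<in> carr G" "grev G (grev G x) = x" "gorg G x \<in> gverts G" using a by simp_all
  note b = graph_ax[OF assms(1) \<open>grev G x \<in> carr G\<close>]
  show "tgt G x \<in> gverts G" unfolding tgt_def using b by simp
  show "tgt G (grev G x) = gorg G x" unfolding tgt_def using a by simp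
qed

lemma graph_vert:
  assumes "is_graph G" "v \<in> gverts G"
  shows "grev G v = v" "gorg G v = v" "tgt G v = v"
proof -
  note a = graph_ax[OF assms(1) vert_carr[OF assms(2)]]
  show "grev G v = v" "gorg G v = v" using a assms(2) by simp_all
  then show "tgt G v = v" unfolding tgt_def by simp
qed

lemma graph_edge:
  assumes "is_graph G" "x \<in> gedges G"
  shows "grev G x \<in> gedges G" "grev G (grev G x) = x" "gorg G x \<in> gverts G" "tgt G x \<in> gverts G"
    "x \<notin> gverts G"
proof -
  have c: "x \<in> carr G" using assms(2) by (rule edge_carr)
  note a = graph_ax[OF assms(1) c]
  show nv: "x \<notin> gverts G" using graph_disj[OF assms(1)] assms(2) by blast
  show "grev G (grev G x) = x" "gorg G x \<in> gverts G" "tgt G x \<in> gverts G"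
    using a graph_carr[OF assms(1) c] by simp_all
  have r: "grev G x \<in> carr G" using a by simp
  have "grev G x \<notin> gverts G"
  proof
    assume "grev G x \<in> gverts G"
    then have "grev G (grev G x) = grev G x" using graph_vert[OF assms(1)] by blast
    then have "grev G x = x" using a by simp
    then show False using nv a by simp
  qed
  then show "grev G x \<in> gedges G" using r unfolding carr_def by blast
qed

lemma mor_facts:
  assumes "graph_mor B Y f" "z \<in> carr B" "is_graph B"
  shows "f z \<in> carr Y" "f (grev B z) = grev Y (f z)" "f (gorg B z) = gorg Y (f z)"
    "f (tgt B z) = tgt Y (f z)"
proof -
  have m: "\<forall>z\<in>carr B. f z \<in> carr Y \<and> f (grev B z) = grev Y (f z) \<and> f (gorg B z) = gorg Y (f z)"
    using assms(1) unfolding graph_mor_def .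
  show a: "f z \<in> carr Y" "f (grev B z) = grev Y (f z)" "f (gorg B z) = gorg Y (f z)"
    using bspec[OF m assms(2)] by simp_all
  have "grev B z \<in> carr B" using graph_carr(1)[OF assms(3,2)] .
  from bspec[OF m this] have "f (gorg B (grev B z)) = gorg Y (f (grev B z))" by simp
  then show "f (tgt B z) = tgt Y (f z)" using a unfolding tgt_def by simp
qed

lemma mor_vert:
  assumes "graph_mor B Y f" "z \<in> gverts B" "is_graph B" "is_graph Y"
  shows "f z \<in> gverts Y"
proof -
  have z: "z \<in> carr B" using assms unfolding carr_def by auto
  have "f z \<in> carr Y" "grev Y (f z) = f z"
    using mor_facts[OF assms(1) z assms(3)] graph_vert[OF assms(3,2)] by auto
  then show ?thesis using assms(4) unfolding is_graph_def by auto
qed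

lemma wpath_vert: "wpath G v w p \<Longrightarrow> is_graph G \<Longrightarrow> v \<in> gverts G \<and> w \<in> gverts G"
  by (induction rule: wpath.induct) (auto simp: graph_edge)

lemma wpath_src: "wpath G v w p \<Longrightarrow> is_graph G \<Longrightarrow> v \<in> gverts G"
  using wpath_vert[of G v w p] by simp
lemma wpath_tgt: "wpath G v w p \<Longrightarrow> is_graph G \<Longrightarrow> w \<in> gverts G"
  using wpath_vert[of G v w p] by simp

lemma wpath_append: "wpath G v a u \<Longrightarrow> wpath G a w s \<Longrightarrow> wpath G v w (u @ s)"
  by (induction rule: wpath.induct) (auto intro: wpath.intros)

lemma wpath_appendD: "is_graph G \<Longrightarrow> wpath G v w (u @ s) \<Longrightarrow> \<exists>a. wpath G v a u \<and> wpath G a w s"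
proof (induction u arbitrary: v)
  case Nil
  then have "v \<in> gverts G" using wpath_vert by fastforce
  then have "wpath G v v []" by (rule wnil)
  with Nil show ?case by auto
next
  case (Cons l u)
  from Cons.prems(2) have "wpath G v w (l # (u @ s))" by simp
  then show ?case
  proof (cases rule: wpath.cases)
    case (wedge x)
    have "wpath G (tgt G x) w (u @ s)" using wedge by simp
    from Cons.IH[OF Cons.prems(1) this] obtain a where a: "wpath G (tgt G x) a u" "wpath G a w s" by (elim exE conjE)
    have "x \<in> gedges G" using wedge by simp
    from wpath.wedge[OF this a(1)] have "wpath G v a (l # u)" using wedge by simp
    with a(2) show ?thesis by (intro exI conjI)
  next
    case (welt g)
    have "wpath G v w (u @ s)" using welt by simp
    from Cons.IH[OF Cons.prems(1) this] obtain a where a: "wpath G v a u" "wpath G a w s" by (elim exE conjE)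
    have "v \<in> gverts G" "g \<in> carrier (grp G v)" using welt by simp_all
    from wpath.welt[OF this a(1)] have "wpath G v a (l # u)" using welt by simp
    with a(2) show ?thesis by (intro exI conjI)
  qed
qed

lemma wpath_snoc_LG:
  assumes "is_graph G"
  shows "wpath G v w (q @ [LG a g]) \<longleftrightarrow> wpath G v w q \<and> a = w \<and> g \<in> carrier (grp G w)"
proof
  assume h: "wpath G v w (q @ [LG a g])"
  then obtain c where c: "wpath G v c q" "wpath G c w [LG a g]" using wpath_appendD[OF assms] by blast
  from c(2) have "c = a" "a \<in> gverts G" "g \<in> carrier (grp G a)" "wpath G a w []"
    by (auto elim: wpath.cases)
  moreover then have "w = a" by (auto elim: wpath.cases)
  ultimately show "wpath G v w q \<and> a = w \<and> g \<in> carrier (grp G w)" using c by auto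
next
  assume "wpath G v w q \<and> a = w \<and> g \<in> carrier (grp G w)"
  then show "wpath G v w (q @ [LG a g])"
  proof -
    assume h: "wpath G v w q \<and> a = w \<and> g \<in> carrier (grp G w)"
    then have "w \<in> gverts G" using wpath_tgt[OF conjunct1[OF h] assms] by simp
    then have "wpath G w w [LG a g]" using h by (auto intro: wpath.intros)
    then show ?thesis using wpath_append[OF conjunct1[OF h]] by simp
  qed
qed

lemma wpath_LG1: "v \<in> gverts G \<Longrightarrow> g \<in> carrier (grp G v) \<Longrightarrow> wpath G v v [LG v g]"
  by (auto intro: wpath.intros)

lemma wpath_mor:
  assumes "is_graph G" "x \<in> carr G"
  shows "wpath G (gorg G x) (tgt G x) (mor G x)"
proof (cases "x \<in> gedges G")
  case True
  then show ?thesis unfolding mor_def using graph_edge[OF assms(1) True]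
    by (auto intro: wpath.intros)
next
  case False
  then have "x \<in> gverts G" using assms unfolding carr_def by auto
  then show ?thesis unfolding mor_def using False graph_vert[OF assms(1)] by (auto intro: wpath.intros)
qed

lemma gog_graph: "is_gog G \<Longrightarrow> is_graph G"
  unfolding is_gog_def by auto

lemma gog_group: "is_gog G \<Longrightarrow> x \<in> carr G \<Longrightarrow> group (grp G x)"
  unfolding is_gog_def by auto

lemma gog_hm: "is_gog G \<Longrightarrow> x \<in> carr G \<Longrightarrow> hm G x \<in> hom (grp G x) (grp G (gorg G x))"
  unfolding is_gog_def by auto

lemma gog_hb: "is_gog G \<Longrightarrow> x \<in> carr G \<Longrightarrow> hb G x \<in> hom (grp G x) (grp G (grev G x))"
  unfolding is_gog_def by auto

lemma gog_vert_id: "is_gog G \<Longrightarrow> v \<in> gverts G \<Longrightarrow> g \<in> carrier (grp G v) \<Longrightarrow> hm G v g = g \<and> hb G v g = g"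
  unfolding is_gog_def by auto


lemma peq_wpath:
  assumes "is_gog G"
  shows "peq G v w p q \<Longrightarrow> wpath G v w p \<and> wpath G v w q"
proof (induction rule: peq.induct)
  case (pctx a b l r v u w s)
  then show ?case by (auto intro: wpath_append)
next
  case (pmult v g h)
  have gr: "group (grp G v)" using gog_group[OF assms vert_carr[OF pmult(1)]] .
  have "g \<otimes>\<^bsub>grp G v\<^esub> h \<in> carrier (grp G v)" using group.is_monoid[OF gr] pmult(2,3) by (rule monoid.m_closed)
  then show ?case using pmult by (blast intro: wpath.intros)
next
  case (pone v)
  have gr: "group (grp G v)" using gog_group[OF assms vert_carr[OF pone(1)]] .
  have "\<one>\<^bsub>grp G v\<^esub> \<in> carrier (grp G v)" using group.is_monoid[OF gr] by (rule monoid.one_closed)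
  then show ?case using pone by (blast intro: wpath.intros)
next
  case (pinv x)
  have g: "is_graph G" using assms gog_graph by auto
  show ?case using graph_edge[OF g pinv] pinv unfolding tgt_def
    by (auto intro!: wpath.intros simp: tgt_def)
next
  case (pconj x g)
  have g: "is_graph G" using assms gog_graph by auto
  have x: "x \<in> carr G" using edge_carr[OF pconj(1)] .
  have x': "grev G x \<in> carr G" using graph_carr[OF g x] by auto
  have c1: "hm G x g \<in> carrier (grp G (gorg G x))"
    using hom_in_carrier[OF gog_hm[OF assms x] pconj(2)] .
  have c2: "hb G x g \<in> carrier (grp G (grev G x))"
    using hom_in_carrier[OF gog_hb[OF assms x] pconj(2)] .
  have c3: "hm G (grev G x) (hb G x g) \<in> carrier (grp G (tgt G x))"
    using hom_in_carrier[OF gog_hm[OF assms x'] c2] unfolding tgt_def .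
  show ?case using graph_edge[OF g pconj(1)] c1 c3 pconj(1)
    by (auto intro!: wpath.intros)
next
  case (prefl v w p) then show ?case by blast
next
  case (psym v w p q) then show ?case by blast
next
  case (ptrans v w p q r) then show ?case by blast
qed

lemma peq_left:
  assumes "is_gog G" "peq G a b l r" "wpath G v a u"
  shows "peq G v b (u @ l) (u @ r)"
proof -
  have "wpath G a b l" using peq_wpath[OF assms(1,2)] by (rule conjunct1)
  then have "b \<in> gverts G" using wpath_tgt gog_graph[OF assms(1)] by fast
  then have "wpath G b b []" by (rule wnil)
  from pctx[OF assms(2,3) this] show ?thesis by simp
qed

lemma peq_right:
  assumes "is_gog G" "peq G a b l r" "wpath G b w s"
  shows "peq G a w (l @ s) (r @ s)"
proof -
  have "wpath G a b l" using peq_wpath[OF assms(1,2)] by (rule conjunct1)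
  then have "a \<in> gverts G" using wpath_src gog_graph[OF assms(1)] by fast
  then have "wpath G a a []" by (rule wnil)
  from pctx[OF assms(2) this assms(3)] show ?thesis by simp
qed

lemma peq_trans': "peq G v w p q \<Longrightarrow> peq G v w q r \<Longrightarrow> peq G v w p r"
  by (rule ptrans)

lemma peq_cancel:
  assumes "is_gog G" "y \<in> carr G"
  shows "peq G (gorg G y) (gorg G y) (mor G y @ [LG (tgt G y) \<one>\<^bsub>grp G (tgt G y)\<^esub>] @ mor G (grev G y)) []"
proof -
  have g: "is_graph G" using gog_graph assms by auto
  show ?thesis
  proof (cases "y \<in> gedges G")
    case True
    note e = graph_edge[OF g True]
    have m: "mor G y = [LE y]" "mor G (grev G y) = [LE (grev G y)]" using True e unfolding mor_def by auto
    have p1: "peq G (tgt G y) (tgt G y) [LG (tgt G y) \<one>\<^bsub>grp G (tgt G y)\<^esub>] []"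
      using e by (rule_tac pone) auto
    have w1: "wpath G (gorg G y) (tgt G y) [LE y]" using e True by (auto intro: wpath.intros)
    have w2: "wpath G (tgt G y) (gorg G y) [LE (grev G y)]" using e True
      by (auto intro!: wpath.intros simp: tgt_def)
    have "peq G (gorg G y) (gorg G y) ([LE y] @ [LG (tgt G y) \<one>\<^bsub>grp G (tgt G y)\<^esub>] @ [LE (grev G y)])
        ([LE y] @ [] @ [LE (grev G y)])"
      by (rule pctx[OF p1 w1 w2])
    moreover have "peq G (gorg G y) (gorg G y) [LE y, LE (grev G y)] []" using True by (rule pinv)
    ultimately show ?thesis unfolding m by (auto intro: ptrans)
  next
    case False
    then have v: "y \<in> gverts G" using assms unfolding carr_def by auto
    note gv = graph_vert[OF g v]
    show ?thesis using False gv v unfolding mor_def by (auto intro: pone)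
  qed
qed

lemma peq_conj_gen:
  assumes "is_gog G" "y \<in> carr G" "k \<in> carrier (grp G y)"
  shows "peq G (gorg G y) (tgt G y) ([LG (gorg G y) (hm G y k)] @ mor G y)
     (mor G y @ [LG (tgt G y) (hm G (grev G y) (hb G y k))])"
proof (cases "y \<in> gedges G")
  case True
  then show ?thesis unfolding mor_def using pconj[OF True assms(3)] by simp
next
  case False
  have g: "is_graph G" using gog_graph assms by auto
  then have v: "y \<in> gverts G" using assms False unfolding carr_def by auto
  note gv = graph_vert[OF g v]
  have "hm G y k = k" "hb G y k = k" using gog_vert_id[OF assms(1) v assms(3)] by auto
  then show ?thesis using False gv v assms unfolding mor_def
    by (auto intro!: prefl wpath.intros)
qed


lemma biset_facts:
  assumes "is_biset GL GR S l r"
  shows "\<And>g b. g \<in> carrier GL \<Longrightarrow> b \<in> S \<Longrightarrow> l g b \<in> S"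
    "\<And>h b. h \<in> carrier GR \<Longrightarrow> b \<in> S \<Longrightarrow> r b h \<in> S"
    "\<And>b. b \<in> S \<Longrightarrow> l \<one>\<^bsub>GL\<^esub> b = b"
    "\<And>b. b \<in> S \<Longrightarrow> r b \<one>\<^bsub>GR\<^esub> = b"
    "\<And>g g' b. g \<in> carrier GL \<Longrightarrow> g' \<in> carrier GL \<Longrightarrow> b \<in> S \<Longrightarrow> l (g \<otimes>\<^bsub>GL\<^esub> g') b = l g (l g' b)"
    "\<And>h h' b. h \<in> carrier GR \<Longrightarrow> h' \<in> carrier GR \<Longrightarrow> b \<in> S \<Longrightarrow> r b (h \<otimes>\<^bsub>GR\<^esub> h') = r (r b h) h'"
    "\<And>g h b. g \<in> carrier GL \<Longrightarrow> h \<in> carrier GR \<Longrightarrow> b \<in> S \<Longrightarrow> l g (r b h) = r (l g b) h"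
  using assms unfolding is_biset_def by simp_all

locale LF =
  fixes Y :: "('y,'g) gog" and X :: "('x,'h) gog" and B :: "('z,'y,'x,'g,'h,'b) gobs" and dag :: 'y
  assumes Yg: "is_gog Y" and Xg: "is_gog X" and Bg: "is_gobs Y X B" and Fb: "left_fibrant Y X B"
    and dag: "dag \<in> gverts Y"
begin

lemma gY: "is_graph Y" using gog_graph[OF Yg] .
lemma gX: "is_graph X" using gog_graph[OF Xg] .
lemma gB: "is_graph B" using Bg unfolding is_gobs_def by simp
lemma lamM: "graph_mor B Y (lam B)" using Bg unfolding is_gobs_def by simp
lemma rhoM: "graph_mor B X (rho B)" using Bg unfolding is_gobs_def by simp

lemma gobs_z:
  assumes "z \<in> carr B"
  shows "is_biset (grp Y (lam B z)) (grp X (rho B z)) (bs B z) (lact B z) (ract B z) \<and>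
        (\<forall>b\<in>bs B z. bm B z b \<in> bs B (gorg B z) \<and>
           (\<forall>g\<in>carrier (grp Y (lam B z)). \<forall>h\<in>carrier (grp X (rho B z)).
              bm B z (lact B z g (ract B z b h)) =
              lact B (gorg B z) (hm Y (lam B z) g) (ract B (gorg B z) (bm B z b) (hm X (rho B z) h)))) \<and>
        (\<forall>b\<in>bs B z. bb B z b \<in> bs B (grev B z) \<and>
           (\<forall>g\<in>carrier (grp Y (lam B z)). \<forall>h\<in>carrier (grp X (rho B z)).
              bb B z (lact B z g (ract B z b h)) =
              lact B (grev B z) (hb Y (lam B z) g) (ract B (grev B z) (bb B z b) (hb X (rho B z) h)))) \<and>
        (\<forall>b\<in>bs B z. bb B (grev B z) (bb B z b) = b)"
proof -
  have "\<forall>z\<in>carr B.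
        is_biset (grp Y (lam B z)) (grp X (rho B z)) (bs B z) (lact B z) (ract B z) \<and>
        (\<forall>b\<in>bs B z. bm B z b \<in> bs B (gorg B z) \<and>
           (\<forall>g\<in>carrier (grp Y (lam B z)). \<forall>h\<in>carrier (grp X (rho B z)).
              bm B z (lact B z g (ract B z b h)) =
              lact B (gorg B z) (hm Y (lam B z) g) (ract B (gorg B z) (bm B z b) (hm X (rho B z) h)))) \<and>
        (\<forall>b\<in>bs B z. bb B z b \<in> bs B (grev B z) \<and>
           (\<forall>g\<in>carrier (grp Y (lam B z)). \<forall>h\<in>carrier (grp X (rho B z)).
              bb B z (lact B z g (ract B z b h)) =
              lact B (grev B z) (hb Y (lam B z) g) (ract B (grev B z) (bb B z b) (hb X (rho B z) h)))) \<and>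
        (\<forall>b\<in>bs B z. bb B (grev B z) (bb B z b) = b)"
    using Bg unfolding is_gobs_def by (elim conjE)
  then show ?thesis using assms by (rule bspec)
qed

lemma gobs_v: "v \<in> gverts B \<Longrightarrow> b \<in> bs B v \<Longrightarrow> bm B v b = b \<and> bb B v b = b"
  using Bg unfolding is_gobs_def by simp

lemma bis: "z \<in> carr B \<Longrightarrow> is_biset (grp Y (lam B z)) (grp X (rho B z)) (bs B z) (lact B z) (ract B z)"
  using gobs_z by blast

lemmas bis_facts = biset_facts[OF bis]

lemma bm_closed: "z \<in> carr B \<Longrightarrow> b \<in> bs B z \<Longrightarrow> bm B z b \<in> bs B (gorg B z)"
  using gobs_z by blast
lemma bb_closed: "z \<in> carr B \<Longrightarrow> b \<in> bs B z \<Longrightarrow> bb B z b \<in> bs B (grev B z)"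
  using gobs_z by blast
lemma bb_inv: "z \<in> carr B \<Longrightarrow> b \<in> bs B z \<Longrightarrow> bb B (grev B z) (bb B z b) = b"
  using gobs_z by blast
lemma bm_cong: "z \<in> carr B \<Longrightarrow> b \<in> bs B z \<Longrightarrow> g \<in> carrier (grp Y (lam B z)) \<Longrightarrow>
   h \<in> carrier (grp X (rho B z)) \<Longrightarrow> bm B z (lact B z g (ract B z b h)) =
              lact B (gorg B z) (hm Y (lam B z) g) (ract B (gorg B z) (bm B z b) (hm X (rho B z) h))"
  using gobs_z by blast
lemma bb_cong: "z \<in> carr B \<Longrightarrow> b \<in> bs B z \<Longrightarrow> g \<in> carrier (grp Y (lam B z)) \<Longrightarrow>
   h \<in> carrier (grp X (rho B z)) \<Longrightarrow> bb B z (lact B z g (ract B z b h)) =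
              lact B (grev B z) (hb Y (lam B z) g) (ract B (grev B z) (bb B z b) (hb X (rho B z) h))"
  using gobs_z by blast

lemma lamF: "z \<in> carr B \<Longrightarrow> lam B z \<in> carr Y \<and> lam B (grev B z) = grev Y (lam B z) \<and>
   lam B (gorg B z) = gorg Y (lam B z) \<and> lam B (tgt B z) = tgt Y (lam B z)"
  using mor_facts[OF lamM _ gB] by simp
lemma rhoF: "z \<in> carr B \<Longrightarrow> rho B z \<in> carr X \<and> rho B (grev B z) = grev X (rho B z) \<and>
   rho B (gorg B z) = gorg X (rho B z) \<and> rho B (tgt B z) = tgt X (rho B z)"
  using mor_facts[OF rhoM _ gB] by simp

lemma grpY: "z \<in> carr B \<Longrightarrow> group (grp Y (lam B z))"
  using gog_group[OF Yg] lamF by blast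
lemma grpX: "z \<in> carr B \<Longrightarrow> group (grp X (rho B z))"
  using gog_group[OF Xg] rhoF by blast

lemma hmX_one: "z \<in> carr B \<Longrightarrow> hm X (rho B z) \<one>\<^bsub>grp X (rho B z)\<^esub> = \<one>\<^bsub>grp X (rho B (gorg B z))\<^esub>"
proof -
  assume z: "z \<in> carr B"
  have r: "rho B z \<in> carr X" using rhoF[OF z] by simp
  have "gorg X (rho B z) \<in> carr X" using vert_carr[OF graph_carr(3)[OF gX r]] .
  then have "hm X (rho B z) \<one>\<^bsub>grp X (rho B z)\<^esub> = \<one>\<^bsub>grp X (gorg X (rho B z))\<^esub>"
    using hom_one[OF gog_hm[OF Xg r] gog_group[OF Xg r] gog_group[OF Xg]] by blast
  then show ?thesis using rhoF[OF z] by simp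
qed

lemma hbX_one: "z \<in> carr B \<Longrightarrow> hb X (rho B z) \<one>\<^bsub>grp X (rho B z)\<^esub> = \<one>\<^bsub>grp X (rho B (grev B z))\<^esub>"
proof -
  assume z: "z \<in> carr B"
  have r: "rho B z \<in> carr X" using rhoF[OF z] by simp
  have "grev X (rho B z) \<in> carr X" using graph_carr(1)[OF gX r] by blast
  then have "hb X (rho B z) \<one>\<^bsub>grp X (rho B z)\<^esub> = \<one>\<^bsub>grp X (grev X (rho B z))\<^esub>"
    using hom_one[OF gog_hb[OF Xg r] gog_group[OF Xg r] gog_group[OF Xg]] by blast
  then show ?thesis using rhoF[OF z] by simp
qed

lemma hmY_one: "z \<in> carr B \<Longrightarrow> hm Y (lam B z) \<one>\<^bsub>grp Y (lam B z)\<^esub> = \<one>\<^bsub>grp Y (lam B (gorg B z))\<^esub>"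
proof -
  assume z: "z \<in> carr B"
  have r: "lam B z \<in> carr Y" using lamF[OF z] by simp
  have "gorg Y (lam B z) \<in> carr Y" using vert_carr[OF graph_carr(3)[OF gY r]] .
  then have "hm Y (lam B z) \<one>\<^bsub>grp Y (lam B z)\<^esub> = \<one>\<^bsub>grp Y (gorg Y (lam B z))\<^esub>"
    using hom_one[OF gog_hm[OF Yg r] gog_group[OF Yg r] gog_group[OF Yg]] by blast
  then show ?thesis using lamF[OF z] by simp
qed

lemma hbY_one: "z \<in> carr B \<Longrightarrow> hb Y (lam B z) \<one>\<^bsub>grp Y (lam B z)\<^esub> = \<one>\<^bsub>grp Y (lam B (grev B z))\<^esub>"
proof -
  assume z: "z \<in> carr B"
  have r: "lam B z \<in> carr Y" using lamF[OF z] by simp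
  have "grev Y (lam B z) \<in> carr Y" using graph_carr(1)[OF gY r] by blast
  then have "hb Y (lam B z) \<one>\<^bsub>grp Y (lam B z)\<^esub> = \<one>\<^bsub>grp Y (grev Y (lam B z))\<^esub>"
    using hom_one[OF gog_hb[OF Yg r] gog_group[OF Yg r] gog_group[OF Yg]] by blast
  then show ?thesis using lamF[OF z] by simp
qed

lemma oneY: "z \<in> carr B \<Longrightarrow> \<one>\<^bsub>grp Y (lam B z)\<^esub> \<in> carrier (grp Y (lam B z))"
  using grpY by (simp add: group.is_monoid monoid.one_closed)
lemma oneX: "z \<in> carr B \<Longrightarrow> \<one>\<^bsub>grp X (rho B z)\<^esub> \<in> carrier (grp X (rho B z))"
  using grpX by (simp add: group.is_monoid monoid.one_closed)

lemma orgB: "z \<in> carr B \<Longrightarrow> gorg B z \<in> carr B"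
  by (rule vert_carr[OF graph_carr(3)[OF gB]])
lemma revB: "z \<in> carr B \<Longrightarrow> grev B z \<in> carr B"
  using graph_carr(1)[OF gB] by blast

lemma bm_l: assumes "z \<in> carr B" "b \<in> bs B z" "g \<in> carrier (grp Y (lam B z))"
  shows "bm B z (lact B z g b) = lact B (gorg B z) (hm Y (lam B z) g) (bm B z b)"
proof -
  have "bm B z (lact B z g (ract B z b \<one>\<^bsub>grp X (rho B z)\<^esub>)) =
      lact B (gorg B z) (hm Y (lam B z) g) (ract B (gorg B z) (bm B z b) (hm X (rho B z) \<one>\<^bsub>grp X (rho B z)\<^esub>))"
    using bm_cong[OF assms oneX[OF assms(1)]] .
  moreover have "ract B z b \<one>\<^bsub>grp X (rho B z)\<^esub> = b" using bis_facts(4)[OF assms(1,2)] .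
  moreover have "ract B (gorg B z) (bm B z b) \<one>\<^bsub>grp X (rho B (gorg B z))\<^esub> = bm B z b"
    using bis_facts(4)[OF orgB[OF assms(1)] bm_closed[OF assms(1,2)]] .
  ultimately show ?thesis using hmX_one[OF assms(1)] by simp
qed

lemma bm_r: assumes "z \<in> carr B" "b \<in> bs B z" "h \<in> carrier (grp X (rho B z))"
  shows "bm B z (ract B z b h) = ract B (gorg B z) (bm B z b) (hm X (rho B z) h)"
proof -
  have "bm B z (lact B z \<one>\<^bsub>grp Y (lam B z)\<^esub> (ract B z b h)) =
      lact B (gorg B z) (hm Y (lam B z) \<one>\<^bsub>grp Y (lam B z)\<^esub>) (ract B (gorg B z) (bm B z b) (hm X (rho B z) h))"
    using bm_cong[OF assms(1,2) oneY[OF assms(1)] assms(3)] .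
  moreover have "lact B z \<one>\<^bsub>grp Y (lam B z)\<^esub> (ract B z b h) = ract B z b h"
    using bis_facts(3)[OF assms(1) bis_facts(2)[OF assms(1) assms(3,2)]] .
  moreover have "hm X (rho B z) h \<in> carrier (grp X (rho B (gorg B z)))"
    using hom_in_carrier[OF gog_hm[OF Xg] assms(3)] rhoF[OF assms(1)] by simp
  then have "lact B (gorg B z) \<one>\<^bsub>grp Y (lam B (gorg B z))\<^esub> (ract B (gorg B z) (bm B z b) (hm X (rho B z) h))
      = ract B (gorg B z) (bm B z b) (hm X (rho B z) h)"
    using bis_facts(3)[OF orgB[OF assms(1)] bis_facts(2)[OF orgB[OF assms(1)] _ bm_closed[OF assms(1,2)]]]
    by simp
  ultimately show ?thesis using hmY_one[OF assms(1)] by simp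
qed

lemma bb_l: assumes "z \<in> carr B" "b \<in> bs B z" "g \<in> carrier (grp Y (lam B z))"
  shows "bb B z (lact B z g b) = lact B (grev B z) (hb Y (lam B z) g) (bb B z b)"
proof -
  have "bb B z (lact B z g (ract B z b \<one>\<^bsub>grp X (rho B z)\<^esub>)) =
      lact B (grev B z) (hb Y (lam B z) g) (ract B (grev B z) (bb B z b) (hb X (rho B z) \<one>\<^bsub>grp X (rho B z)\<^esub>))"
    using bb_cong[OF assms oneX[OF assms(1)]] .
  moreover have "ract B z b \<one>\<^bsub>grp X (rho B z)\<^esub> = b" using bis_facts(4)[OF assms(1,2)] .
  moreover have "ract B (grev B z) (bb B z b) \<one>\<^bsub>grp X (rho B (grev B z))\<^esub> = bb B z b"
    using bis_facts(4)[OF revB[OF assms(1)] bb_closed[OF assms(1,2)]] .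
  ultimately show ?thesis using hbX_one[OF assms(1)] by simp
qed

lemma bb_r: assumes "z \<in> carr B" "b \<in> bs B z" "h \<in> carrier (grp X (rho B z))"
  shows "bb B z (ract B z b h) = ract B (grev B z) (bb B z b) (hb X (rho B z) h)"
proof -
  have "bb B z (lact B z \<one>\<^bsub>grp Y (lam B z)\<^esub> (ract B z b h)) =
      lact B (grev B z) (hb Y (lam B z) \<one>\<^bsub>grp Y (lam B z)\<^esub>) (ract B (grev B z) (bb B z b) (hb X (rho B z) h))"
    using bb_cong[OF assms(1,2) oneY[OF assms(1)] assms(3)] .
  moreover have "lact B z \<one>\<^bsub>grp Y (lam B z)\<^esub> (ract B z b h) = ract B z b h"
    using bis_facts(3)[OF assms(1) bis_facts(2)[OF assms(1) assms(3,2)]] .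
  moreover have "hb X (rho B z) h \<in> carrier (grp X (rho B (grev B z)))"
    using hom_in_carrier[OF gog_hb[OF Xg] assms(3)] rhoF[OF assms(1)] by simp
  then have "lact B (grev B z) \<one>\<^bsub>grp Y (lam B (grev B z))\<^esub> (ract B (grev B z) (bb B z b) (hb X (rho B z) h))
      = ract B (grev B z) (bb B z b) (hb X (rho B z) h)"
    using bis_facts(3)[OF revB[OF assms(1)] bis_facts(2)[OF revB[OF assms(1)] _ bb_closed[OF assms(1,2)]]]
    by simp
  ultimately show ?thesis using hbY_one[OF assms(1)] by simp
qed

end

context LF begin

definition phi :: "'z \<Rightarrow> ('z \<times> 'g \<times> 'b) \<Rightarrow> 'b" where
  "phi v = (\<lambda>(e, g, b). lact B v g (bm B e b))"

lemma phi_simp: "phi v (e, g, c) = lact B v g (bm B e c)"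
  unfolding phi_def by simp

lemma rho_edge: "z \<in> gedges B \<Longrightarrow> rho B z \<in> gedges X"
  using Fb unfolding left_fibrant_def by blast

lemma fibF: "v \<in> gverts B \<Longrightarrow> f \<in> gedges X \<Longrightarrow> gorg X f = rho B v \<Longrightarrow>
   bij_betw (\<lambda>C. the_elem (phi v ` C)) (fib_dom Y B v f // fib_rel Y B v f) (bs B v)"
  using Fb unfolding left_fibrant_def phi_def by blast

lemma fib_dom_mem: "(e, g, c) \<in> fib_dom Y B v f \<longleftrightarrow> e \<in> gedges B \<and> rho B e = f \<and> gorg B e = v \<and>
   g \<in> carrier (grp Y (lam B v)) \<and> c \<in> bs B e"
  unfolding fib_dom_def by simp

lemma phi_rel:
  assumes "(a, a') \<in> fib_rel Y B v f"
  shows "phi v a = phi v a'"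
  using assms unfolding fib_rel_def
proof (rule eqc_inv)
  fix x y
  assume r: "(x, y) \<in> {((e, g \<otimes>\<^bsub>grp Y (lam B v)\<^esub> hm Y (lam B e) k, b), (e, g, lact B e k b)) | e g b k.
        k \<in> carrier (grp Y (lam B e))}" and xd: "x \<in> fib_dom Y B v f" and yd: "y \<in> fib_dom Y B v f"
  from r obtain e g b k where xy: "x = (e, g \<otimes>\<^bsub>grp Y (lam B v)\<^esub> hm Y (lam B e) k, b)" "y = (e, g, lact B e k b)"
    and k: "k \<in> carrier (grp Y (lam B e))" by blast
  have e: "e \<in> gedges B" "gorg B e = v" "g \<in> carrier (grp Y (lam B v))" "b \<in> bs B e"
    using yd xd unfolding xy fib_dom_mem by simp_all
  have ec: "e \<in> carr B" using edge_carr[OF e(1)] .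
  have vc: "v \<in> carr B" using orgB[OF ec] e(2) by simp
  have hk: "hm Y (lam B e) k \<in> carrier (grp Y (lam B v))"
    using hom_in_carrier[OF gog_hm[OF Yg] k] lamF[OF ec] e(2) by simp
  have bmc: "bm B e b \<in> bs B v" using bm_closed[OF ec e(4)] e(2) by simp
  have "phi v x = lact B v g (lact B v (hm Y (lam B e) k) (bm B e b))"
    unfolding xy phi_simp using bis_facts(5)[OF vc e(3) hk bmc] .
  also have "\<dots> = phi v y"
    unfolding xy phi_simp using bm_l[OF ec e(4) k] e(2) by simp
  finally show "phi v x = phi v y" .
qed

lemma fib_class:
  assumes "a \<in> fib_dom Y B v f"
  shows "the_elem (phi v ` (fib_rel Y B v f `` {a})) = phi v a"
proof -
  have "phi v ` (fib_rel Y B v f `` {a}) = {phi v a}"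
  proof
    show "phi v ` (fib_rel Y B v f `` {a}) \<subseteq> {phi v a}" using phi_rel by fastforce
    have "a \<in> fib_rel Y B v f `` {a}"
      using equiv_class_self[OF eqc_equiv assms] unfolding fib_rel_def .
    then show "{phi v a} \<subseteq> phi v ` (fib_rel Y B v f `` {a})" by blast
  qed
  then show ?thesis by simp
qed

lemma fib_inj:
  assumes "v \<in> gverts B" "f \<in> gedges X" "gorg X f = rho B v"
    "a \<in> fib_dom Y B v f" "a' \<in> fib_dom Y B v f" "phi v a = phi v a'"
  shows "(a, a') \<in> fib_rel Y B v f"
proof -
  have inj: "inj_on (\<lambda>C. the_elem (phi v ` C)) (fib_dom Y B v f // fib_rel Y B v f)"
    using fibF[OF assms(1-3)] by (rule bij_betw_imp_inj_on)
  have "fib_rel Y B v f `` {a} = fib_rel Y B v f `` {a'}"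
    using inj_onD[OF inj _ quotientI[OF assms(4)] quotientI[OF assms(5)]]
      fib_class[OF assms(4)] fib_class[OF assms(5)] assms(6) by simp
  then show ?thesis using eq_equiv_class_iff[OF eqc_equiv assms(4,5)] unfolding fib_rel_def by simp
qed

lemma fib_surj:
  assumes "v \<in> gverts B" "f \<in> gedges X" "gorg X f = rho B v" "b \<in> bs B v"
  shows "\<exists>a. a \<in> fib_dom Y B v f \<and> phi v a = b"
proof -
  have "(\<lambda>C. the_elem (phi v ` C)) ` (fib_dom Y B v f // fib_rel Y B v f) = bs B v"
    using fibF[OF assms(1-3)] by (rule bij_betw_imp_surj_on)
  with assms(4) obtain C where C: "C \<in> fib_dom Y B v f // fib_rel Y B v f" "b = the_elem (phi v ` C)"
    by blast
  from C(1) obtain a where a: "C = fib_rel Y B v f `` {a}" "a \<in> fib_dom Y B v f" by (rule quotientE)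
  have "phi v a = b" using a(1) fib_class[OF a(2)] C(2) by simp
  then show ?thesis using a(2) by blast
qed

definition dec :: "'z \<Rightarrow> 'x \<Rightarrow> 'b \<Rightarrow> ('z \<times> 'g \<times> 'b)" where
  "dec v f b = (SOME a. a \<in> fib_dom Y B v f \<and> phi v a = b)"

lemma dec:
  assumes "v \<in> gverts B" "f \<in> gedges X" "gorg X f = rho B v" "b \<in> bs B v"
  shows "dec v f b \<in> fib_dom Y B v f \<and> phi v (dec v f b) = b"
  unfolding dec_def using someI_ex[OF fib_surj[OF assms]] .

end

context LF begin

definition Sx :: "('y,'g) letter list \<Rightarrow> 'z \<Rightarrow> ('z \<times> 'g \<times> 'b) \<Rightarrow> ('z \<times> ('y,'g) letter list \<times> 'b)" where
  "Sx q v a = (case a of (e, g, c) \<Rightarrow>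
     (tgt B e, q @ [LG (lam B v) g] @ mor Y (lam B e), bm B (grev B e) (bb B e c)))"

lemma Sx_simp: "Sx q v (e, g, c) = (tgt B e, q @ [LG (lam B v) g] @ mor Y (lam B e), bm B (grev B e) (bb B e c))"
  unfolding Sx_def by simp

abbreviation Ld where "Ld x \<equiv> lhs_dom Y X B dag x"
abbreviation Lr where "Lr x \<equiv> lhs_rel Y X B dag x"

lemma Ld_mem: "(z, q, b) \<in> Ld x \<longleftrightarrow> z \<in> gverts B \<and> rho B z = x \<and> wpath Y dag (lam B z) q \<and> b \<in> bs B z"
  unfolding lhs_dom_def by simp

lemma Lr_equiv: "equiv (Ld x) (Lr x)"
  unfolding lhs_rel_def by (rule eqc_equiv)

lemma Lr_dom: "(T, T') \<in> Lr x \<Longrightarrow> T \<in> Ld x \<and> T' \<in> Ld x"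
  unfolding lhs_rel_def by (rule eqc_mem)

lemma Lr_refl: "T \<in> Ld x \<Longrightarrow> (T, T) \<in> Lr x"
  unfolding lhs_rel_def by (rule eqc_refl)
lemma Lr_sym: "(T, T') \<in> Lr x \<Longrightarrow> (T', T) \<in> Lr x"
  unfolding lhs_rel_def by (rule eqc_sym)
lemma Lr_trans: "(T, T') \<in> Lr x \<Longrightarrow> (T', T'') \<in> Lr x \<Longrightarrow> (T, T'') \<in> Lr x"
  unfolding lhs_rel_def by (rule eqc_trans)

lemma Lr_peq:
  assumes "z \<in> gverts B" "rho B z = x" "b \<in> bs B z" "peq Y dag (lam B z) q q'"
  shows "((z, q, b), (z, q', b)) \<in> Lr x"
proof -
  have w: "wpath Y dag (lam B z) q" "wpath Y dag (lam B z) q'" using peq_wpath[OF Yg assms(4)] by simp_all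
  show ?thesis unfolding lhs_rel_def
    by (rule eqc_base) (use assms w in \<open>auto simp: Ld_mem\<close>)
qed

lemma vB: "z \<in> gverts B \<Longrightarrow> z \<in> carr B" by (rule vert_carr)

lemma lam_vert: "z \<in> gverts B \<Longrightarrow> lam B z \<in> gverts Y"
  using mor_vert[OF lamM _ gB gY] .

lemma Lr_LG:
  assumes "z \<in> gverts B" "rho B z = x" "wpath Y dag (lam B z) q" "g \<in> carrier (grp Y (lam B z))" "b \<in> bs B z"
  shows "((z, q @ [LG (lam B z) g], b), (z, q, lact B z g b)) \<in> Lr x"
proof -
  have w: "wpath Y dag (lam B z) (q @ [LG (lam B z) g])" using wpath_snoc_LG[OF gY] assms(3,4) by simp
  have l: "lact B z g b \<in> bs B z" using bis_facts(1)[OF vB[OF assms(1)] assms(4,5)] .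
  show ?thesis unfolding lhs_rel_def
    by (rule eqc_base) (use assms w l in \<open>auto simp: Ld_mem\<close>)
qed

lemma Sx_dom:
  assumes "(e, g, c) \<in> fib_dom Y B v f" "v \<in> gverts B" "wpath Y dag (lam B v) q"
  shows "Sx q v (e, g, c) \<in> Ld (tgt X f)"
proof -
  have e: "e \<in> gedges B" "rho B e = f" "gorg B e = v" "g \<in> carrier (grp Y (lam B v))" "c \<in> bs B e"
    using assms(1) unfolding fib_dom_mem by simp_all
  have ec: "e \<in> carr B" using edge_carr[OF e(1)] .
  note lf = lamF[OF ec] and rf = rhoF[OF ec]
  have t: "tgt B e \<in> gverts B" using graph_edge(4)[OF gB e(1)] .
  have w1: "wpath Y dag (lam B v) (q @ [LG (lam B v) g])" using wpath_snoc_LG[OF gY] assms(3) e(4) by simp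
  have w2: "wpath Y (lam B v) (lam B (tgt B e)) (mor Y (lam B e))"
    using wpath_mor[OF gY] lf e(3) by fastforce
  have w: "wpath Y dag (lam B (tgt B e)) (q @ [LG (lam B v) g] @ mor Y (lam B e))"
    using wpath_append[OF w1 w2] by simp
  have bc: "bm B (grev B e) (bb B e c) \<in> bs B (tgt B e)"
    using bm_closed[OF revB[OF ec] bb_closed[OF ec e(5)]] unfolding tgt_def .
  show ?thesis unfolding Sx_simp Ld_mem using t w bc rf e(2) by simp
qed

lemma step_base:
  assumes "v \<in> gverts B" "wpath Y dag (lam B v) q"
  and r: "(x, y) \<in> {((e, g \<otimes>\<^bsub>grp Y (lam B v)\<^esub> hm Y (lam B e) k, b), (e, g, lact B e k b)) | e g b k.
        k \<in> carrier (grp Y (lam B e))}" and xd: "x \<in> fib_dom Y B v f" and yd: "y \<in> fib_dom Y B v f"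
  shows "(Sx q v x, Sx q v y) \<in> Lr (tgt X f)"
proof -
  from r obtain e g c k where xy: "x = (e, g \<otimes>\<^bsub>grp Y (lam B v)\<^esub> hm Y (lam B e) k, c)" "y = (e, g, lact B e k c)"
    and k: "k \<in> carrier (grp Y (lam B e))" by blast
  have e: "e \<in> gedges B" "rho B e = f" "gorg B e = v" "g \<in> carrier (grp Y (lam B v))" "c \<in> bs B e"
    using yd xd unfolding xy fib_dom_mem by simp_all
  have ec: "e \<in> carr B" using edge_carr[OF e(1)] .
  note lf = lamF[OF ec] and rf = rhoF[OF ec]
  define y0 where "y0 = lam B e"
  define t where "t = tgt B e"
  have tv: "t \<in> gverts B" unfolding t_def using graph_edge(4)[OF gB e(1)] .
  have lt: "lam B t = tgt Y y0" unfolding t_def y0_def using lf by simp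
  have lv: "lam B v = gorg Y y0" unfolding y0_def using lf e(3) by simp
  have rt: "rho B t = tgt X f" unfolding t_def using rf e(2) by simp
  have y0c: "y0 \<in> carr Y" unfolding y0_def using lf by simp
  have lvv: "lam B v \<in> gverts Y" using lam_vert[OF assms(1)] .
  have grv: "group (grp Y (lam B v))" using grpY[OF vB[OF assms(1)]] .
  have hk: "hm Y y0 k \<in> carrier (grp Y (lam B v))"
    using hom_in_carrier[OF gog_hm[OF Yg y0c] k[folded y0_def]] lv by simp
  have k2: "hm Y (grev Y y0) (hb Y y0 k) \<in> carrier (grp Y (lam B t))"
  proof -
    have "grev Y y0 \<in> carr Y" using graph_carr(1)[OF gY y0c] .
    moreover have "hb Y y0 k \<in> carrier (grp Y (grev Y y0))"
      using hom_in_carrier[OF gog_hb[OF Yg y0c] k[folded y0_def]] .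
    ultimately have "hm Y (grev Y y0) (hb Y y0 k) \<in> carrier (grp Y (gorg Y (grev Y y0)))"
      using hom_in_carrier[OF gog_hm[OF Yg]] by blast
    then show ?thesis using lt unfolding tgt_def by simp
  qed
  define cp where "cp = bm B (grev B e) (bb B e c)"
  have cpc: "cp \<in> bs B t"
    unfolding cp_def t_def using bm_closed[OF revB[OF ec] bb_closed[OF ec e(5)]] unfolding tgt_def .
  define M where "M = mor Y y0"
  have wM: "wpath Y (gorg Y y0) (tgt Y y0) M" unfolding M_def using wpath_mor[OF gY y0c] .
  have wq: "wpath Y dag (gorg Y y0) q" using assms(2) lv by simp
  have wQ: "wpath Y dag (gorg Y y0) (q @ [LG (gorg Y y0) g])"
    using wpath_snoc_LG[OF gY] wq e(4) lv by simp
  have p1: "peq Y (lam B v) (lam B v) [LG (lam B v) g, LG (lam B v) (hm Y y0 k)]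
     [LG (lam B v) (g \<otimes>\<^bsub>grp Y (lam B v)\<^esub> hm Y y0 k)]"
    by (rule pmult[OF lvv e(4) hk])
  have p1': "peq Y dag (tgt Y y0) (q @ [LG (gorg Y y0) g, LG (gorg Y y0) (hm Y y0 k)] @ M)
      (q @ [LG (gorg Y y0) (g \<otimes>\<^bsub>grp Y (gorg Y y0)\<^esub> hm Y y0 k)] @ M)"
    using pctx[OF p1 assms(2)] wM lv by simp
  have p2: "peq Y dag (tgt Y y0) ((q @ [LG (gorg Y y0) g]) @ [LG (gorg Y y0) (hm Y y0 k)] @ M)
      ((q @ [LG (gorg Y y0) g]) @ M @ [LG (tgt Y y0) (hm Y (grev Y y0) (hb Y y0 k))])"
    using peq_left[OF Yg peq_conj_gen[OF Yg y0c k[folded y0_def]] wQ] unfolding M_def by simp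
  have r1: "(Sx q v x, (t, q @ [LG (gorg Y y0) g, LG (gorg Y y0) (hm Y y0 k)] @ M, cp)) \<in> Lr (tgt X f)"
    unfolding xy Sx_simp M_def[symmetric] y0_def[symmetric] t_def[symmetric] cp_def[symmetric] lv
    by (rule Lr_peq[OF tv rt cpc]) (use ptrans psym p1' lt in \<open>auto intro: psym[OF p1'[unfolded lt[symmetric]]]\<close>)
  have r2: "((t, q @ [LG (gorg Y y0) g, LG (gorg Y y0) (hm Y y0 k)] @ M, cp),
             (t, (q @ [LG (gorg Y y0) g] @ M) @ [LG (lam B t) (hm Y (grev Y y0) (hb Y y0 k))], cp)) \<in> Lr (tgt X f)"
    by (rule Lr_peq[OF tv rt cpc]) (use p2 lt in simp)
  have wQM: "wpath Y dag (lam B t) (q @ [LG (gorg Y y0) g] @ M)"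
    using wpath_append[OF wQ wM] lt by simp
  have r3: "((t, (q @ [LG (gorg Y y0) g] @ M) @ [LG (lam B t) (hm Y (grev Y y0) (hb Y y0 k))], cp),
             (t, q @ [LG (gorg Y y0) g] @ M, lact B t (hm Y (grev Y y0) (hb Y y0 k)) cp)) \<in> Lr (tgt X f)"
    by (rule Lr_LG[OF tv rt wQM k2 cpc])
  have eq: "lact B t (hm Y (grev Y y0) (hb Y y0 k)) cp = bm B (grev B e) (bb B e (lact B e k c))"
  proof -
    have "bb B e (lact B e k c) = lact B (grev B e) (hb Y (lam B e) k) (bb B e c)"
      using bb_l[OF ec e(5) k] .
    moreover have "hb Y (lam B e) k \<in> carrier (grp Y (lam B (grev B e)))"
      using hom_in_carrier[OF gog_hb[OF Yg y0c] k[folded y0_def]] lf y0_def by simp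
    ultimately have "bm B (grev B e) (bb B e (lact B e k c)) =
       lact B (gorg B (grev B e)) (hm Y (lam B (grev B e)) (hb Y (lam B e) k)) (bm B (grev B e) (bb B e c))"
      using bm_l[OF revB[OF ec] bb_closed[OF ec e(5)]] by simp
    then show ?thesis unfolding cp_def t_def tgt_def y0_def using lf by simp
  qed
  have "Sx q v y = (t, q @ [LG (gorg Y y0) g] @ M, lact B t (hm Y (grev Y y0) (hb Y y0 k)) cp)"
    unfolding xy Sx_simp using eq lv unfolding M_def y0_def t_def by simp
  then show "(Sx q v x, Sx q v y) \<in> Lr (tgt X f)"
    using Lr_trans[OF Lr_trans[OF r1 r2] r3] by simp
qed

lemma step_resp:
  assumes "(a, a') \<in> fib_rel Y B v f" "v \<in> gverts B" "wpath Y dag (lam B v) q"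
  shows "(Sx q v a, Sx q v a') \<in> Lr (tgt X f)"
  using assms(1) unfolding fib_rel_def lhs_rel_def
proof (rule eqc_map)
  fix a0 assume "a0 \<in> fib_dom Y B v f"
  then show "Sx q v a0 \<in> Ld (tgt X f)" using Sx_dom[OF _ assms(2,3)] by (cases a0) auto
next
  fix x y
  assume "(x, y) \<in> {((e, g \<otimes>\<^bsub>grp Y (lam B v)\<^esub> hm Y (lam B e) k, b), (e, g, lact B e k b)) | e g b k.
        k \<in> carrier (grp Y (lam B e))}" "x \<in> fib_dom Y B v f" "y \<in> fib_dom Y B v f"
  from step_base[OF assms(2,3) this] show "(Sx q v x, Sx q v y) \<in> eqc (Ld (tgt X f))
     ({((z, q, b), z, q', b) |z q q' b. peq Y dag (lam B z) q q'} \<union>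
      {((z, q @ [LG (lam B z) g], b), z, q, lact B z g b) |z q g b. g \<in> carrier (grp Y (lam B z))})"
    unfolding lhs_rel_def .
qed

end

context LF begin

definition LR0 where
  "LR0 = {((z, q, b), (z, q', b)) | z q q' b. peq Y dag (lam B z) q q'} \<union>
      {((z, q @ [LG (lam B z) g], b), (z, q, lact B z g b)) | z q g b.
          g \<in> carrier (grp Y (lam B z))}"

lemma Lr_def': "Lr x = eqc (Ld x) LR0"
  unfolding lhs_rel_def LR0_def ..

lemma Lr_map:
  assumes "(T, T') \<in> Lr x" "\<And>a. a \<in> Ld x \<Longrightarrow> F a \<in> Ld x'"
    "\<And>a b. (a, b) \<in> LR0 \<Longrightarrow> a \<in> Ld x \<Longrightarrow> b \<in> Ld x \<Longrightarrow> (F a, F b) \<in> Lr x'"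
  shows "(F T, F T') \<in> Lr x'"
  using assms(1) unfolding Lr_def' by (rule eqc_map) (use assms(2,3) in \<open>simp_all add: Lr_def'\<close>)

lemma LR0E:
  assumes "(a, b) \<in> LR0"
  obtains (P) z q q' b0 where "a = (z, q, b0)" "b = (z, q', b0)" "peq Y dag (lam B z) q q'"
  | (G) z q g b0 where "a = (z, q @ [LG (lam B z) g], b0)" "b = (z, q, lact B z g b0)"
     "g \<in> carrier (grp Y (lam B z))"
  using assms unfolding LR0_def by blast

definition stp :: "('z \<times> ('y,'g) letter list \<times> 'b) \<Rightarrow> 'x \<Rightarrow> ('z \<times> ('y,'g) letter list \<times> 'b)" where
  "stp T f = (case T of (z, q, b) \<Rightarrow> Sx q z (dec z f b))"

definition act :: "('z \<times> ('y,'g) letter list \<times> 'b) \<Rightarrow> 'h \<Rightarrow> ('z \<times> ('y,'g) letter list \<times> 'b)" where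
  "act T h = (case T of (z, q, b) \<Rightarrow> (z, q, ract B z b h))"

primrec walk :: "('z \<times> ('y,'g) letter list \<times> 'b) \<Rightarrow> ('x,'h) letter list \<Rightarrow> ('z \<times> ('y,'g) letter list \<times> 'b)" where
  "walk T [] = T"
| "walk T (l # p) = walk (case l of LE f \<Rightarrow> stp T f | LG v h \<Rightarrow> act T h) p"

lemma walk_append: "walk T (u @ s) = walk (walk T u) s"
  by (induction u arbitrary: T) auto

lemma stp_simp: "stp (z, q, b) f = Sx q z (dec z f b)" unfolding stp_def by simp
lemma act_simp: "act (z, q, b) h = (z, q, ract B z b h)" unfolding act_def by simp

lemma dec_at:
  assumes "(z, q, b) \<in> Ld x" "f \<in> gedges X" "gorg X f = x"
  shows "dec z f b \<in> fib_dom Y B z f \<and> phi z (dec z f b) = b"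
  using assms unfolding Ld_mem by (intro dec) auto

lemma Sx_path:
  assumes "(e, g, c) \<in> fib_dom Y B v f"
  shows "wpath Y (lam B v) (lam B (tgt B e)) ([LG (lam B v) g] @ mor Y (lam B e))"
proof -
  have e: "e \<in> gedges B" "rho B e = f" "gorg B e = v" "g \<in> carrier (grp Y (lam B v))" "c \<in> bs B e"
    using assms(1) unfolding fib_dom_mem by simp_all
  have ec: "e \<in> carr B" using edge_carr[OF e(1)] .
  note lf = lamF[OF ec]
  have vv: "v \<in> gverts B" using graph_edge(3)[OF gB e(1)] e(3) by simp
  have w1: "wpath Y (lam B v) (lam B v) [LG (lam B v) g]" using wpath_LG1[OF lam_vert[OF vv] e(4)] .
  have w2: "wpath Y (lam B v) (lam B (tgt B e)) (mor Y (lam B e))"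
    using wpath_mor[OF gY] lf e(3) by fastforce
  show ?thesis using wpath_append[OF w1 w2] .
qed

lemma stp_dom:
  assumes "T \<in> Ld x" "f \<in> gedges X" "gorg X f = x"
  shows "stp T f \<in> Ld (tgt X f)"
proof -
  obtain z q b where T: "T = (z, q, b)" by (cases T) auto
  have d: "dec z f b \<in> fib_dom Y B z f" using dec_at assms T by blast
  obtain e g c where d': "dec z f b = (e, g, c)" by (cases "dec z f b") auto
  have "z \<in> gverts B" "wpath Y dag (lam B z) q" using assms(1) T Ld_mem by simp_all
  then show ?thesis unfolding T stp_simp d' using Sx_dom d d' by simp
qed

lemma act_dom:
  assumes "T \<in> Ld x" "h \<in> carrier (grp X x)"
  shows "act T h \<in> Ld x"
proof -
  obtain z q b where T: "T = (z, q, b)" by (cases T) auto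
  have z: "z \<in> gverts B" "rho B z = x" "wpath Y dag (lam B z) q" "b \<in> bs B z" using assms(1) T Ld_mem by simp_all
  have "ract B z b h \<in> bs B z" using bis_facts(2)[OF vB[OF z(1)]] assms(2) z by simp
  then show ?thesis unfolding T act_simp Ld_mem using z by simp
qed

lemma walk_dom: "wpath X x w p \<Longrightarrow> T \<in> Ld x \<Longrightarrow> walk T p \<in> Ld w"
proof (induction arbitrary: T rule: wpath.induct)
  case (wnil v) then show ?case by simp
next
  case (wedge f w p)
  have "stp T f \<in> Ld (tgt X f)" using stp_dom[OF wedge.prems wedge.hyps(1)] by simp
  then show ?case using wedge.IH by simp
next
  case (welt v g w p)
  have "act T g \<in> Ld v" using act_dom[OF welt.prems welt.hyps(2)] .
  then show ?case using welt.IH by simp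
qed

lemma act_resp:
  assumes "(T, T') \<in> Lr x" "h \<in> carrier (grp X x)"
  shows "(act T h, act T' h) \<in> Lr x"
  using assms(1)
proof (rule Lr_map)
  fix a assume "a \<in> Ld x" then show "act a h \<in> Ld x" using act_dom assms(2) by blast
next
  fix a b assume r: "(a, b) \<in> LR0" and ad: "a \<in> Ld x" and bd: "b \<in> Ld x"
  from r show "(act a h, act b h) \<in> Lr x"
  proof (cases rule: LR0E)
    case (P z q q' b0)
    have z: "z \<in> gverts B" "rho B z = x" "b0 \<in> bs B z" using ad P Ld_mem by simp_all
    have "ract B z b0 h \<in> bs B z" using bis_facts(2)[OF vB[OF z(1)]] assms(2) z by simp
    then show ?thesis unfolding P act_simp using Lr_peq z P(3) by simp
  next
    case (G z q g b0)
    have z: "z \<in> gverts B" "rho B z = x" "b0 \<in> bs B z" "wpath Y dag (lam B z) q" using ad bd G Ld_mem by simp_all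
    have hh: "h \<in> carrier (grp X (rho B z))" using assms(2) z by simp
    have rb: "ract B z b0 h \<in> bs B z" using bis_facts(2)[OF vB[OF z(1)] hh z(3)] .
    have "lact B z g (ract B z b0 h) = ract B z (lact B z g b0) h"
      using bis_facts(7)[OF vB[OF z(1)] G(3) hh z(3)] .
    then show ?thesis unfolding G act_simp using Lr_LG[OF z(1,2,4) G(3) rb] by simp
  qed
qed

end

context LF begin

lemma mor_path:
  assumes "e \<in> carr B"
  shows "wpath Y (lam B (gorg B e)) (lam B (tgt B e)) (mor Y (lam B e))"
  using wpath_mor[OF gY] lamF[OF assms] by fastforce

lemma fib_e:
  assumes "(e, g, c) \<in> fib_dom Y B v f"
  shows "e \<in> gedges B" "rho B e = f" "gorg B e = v" "g \<in> carrier (grp Y (lam B v))" "c \<in> bs B e"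
    "e \<in> carr B" "tgt B e \<in> gverts B" "v \<in> gverts B"
    "bm B (grev B e) (bb B e c) \<in> bs B (tgt B e)" "bm B e c \<in> bs B v"
proof -
  show e: "e \<in> gedges B" "rho B e = f" "gorg B e = v" "g \<in> carrier (grp Y (lam B v))" "c \<in> bs B e"
    using assms(1) unfolding fib_dom_mem by simp_all
  show ec: "e \<in> carr B" using edge_carr[OF e(1)] .
  show "tgt B e \<in> gverts B" using graph_edge(4)[OF gB e(1)] .
  show "v \<in> gverts B" using graph_edge(3)[OF gB e(1)] e(3) by simp
  show "bm B (grev B e) (bb B e c) \<in> bs B (tgt B e)"
    using bm_closed[OF revB[OF ec] bb_closed[OF ec e(5)]] unfolding tgt_def .
  show "bm B e c \<in> bs B v" using bm_closed[OF ec e(5)] e(3) by simp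
qed

lemma stp_base:
  assumes r: "(T, T') \<in> LR0" and ad: "T \<in> Ld x" and bd: "T' \<in> Ld x" and f: "f \<in> gedges X" "gorg X f = x"
  shows "(stp T f, stp T' f) \<in> Lr (tgt X f)"
  using r
proof (cases rule: LR0E)
  case (P z q q' b)
  have z: "z \<in> gverts B" "rho B z = x" "b \<in> bs B z" using ad P Ld_mem by simp_all
  have d: "dec z f b \<in> fib_dom Y B z f" using dec_at ad P f by blast
  obtain e g c where d': "dec z f b = (e, g, c)" by (cases "dec z f b") auto
  note fe = fib_e[OF d[unfolded d']]
  have w: "wpath Y (lam B z) (lam B (tgt B e)) ([LG (lam B z) g] @ mor Y (lam B e))"
    using Sx_path d d' by simp
  have pq: "peq Y dag (lam B (tgt B e)) (q @ [LG (lam B z) g] @ mor Y (lam B e)) (q' @ [LG (lam B z) g] @ mor Y (lam B e))"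
    using peq_right[OF Yg P(3) w] by simp
  have rt: "rho B (tgt B e) = tgt X f" using rhoF[OF fe(6)] fe(2) by simp
  show ?thesis unfolding P stp_simp d' Sx_simp
    by (rule Lr_peq[OF fe(7) rt fe(9) pq])
next
  case (G z q g0 b)
  have z: "z \<in> gverts B" "rho B z = x" "wpath Y dag (lam B z) q" "lact B z g0 b \<in> bs B z" "b \<in> bs B z"
    using ad bd G Ld_mem by simp_all
  have zc: "z \<in> carr B" using vB[OF z(1)] .
  have d: "dec z f b \<in> fib_dom Y B z f" "phi z (dec z f b) = b"
    using dec_at ad G f by blast+
  obtain e g c where d': "dec z f b = (e, g, c)" by (cases "dec z f b") auto
  note fe = fib_e[OF d(1)[unfolded d']]
  have T'd: "(z, q, lact B z g0 b) \<in> Ld x" using bd G by simp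
  have d2: "dec z f (lact B z g0 b) \<in> fib_dom Y B z f" "phi z (dec z f (lact B z g0 b)) = lact B z g0 b"
    using dec_at[OF T'd f] by blast+
  have grz: "group (grp Y (lam B z))" using grpY[OF zc] .
  have gg: "g0 \<otimes>\<^bsub>grp Y (lam B z)\<^esub> g \<in> carrier (grp Y (lam B z))"
    using monoid.m_closed[OF group.is_monoid[OF grz] G(3) fe(4)] .
  have a1: "(e, g0 \<otimes>\<^bsub>grp Y (lam B z)\<^esub> g, c) \<in> fib_dom Y B z f"
    using fe gg unfolding fib_dom_mem by simp
  have "phi z (e, g0 \<otimes>\<^bsub>grp Y (lam B z)\<^esub> g, c) = lact B z g0 (lact B z g (bm B e c))"
    unfolding phi_simp using bis_facts(5)[OF zc G(3) fe(4) fe(10)] .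
  also have "\<dots> = lact B z g0 b" using d(2) d' phi_simp by simp
  finally have "phi z (e, g0 \<otimes>\<^bsub>grp Y (lam B z)\<^esub> g, c) = phi z (dec z f (lact B z g0 b))" using d2(2) by simp
  from fib_inj[OF z(1) f(1) f(2)[folded z(2)] a1 d2(1) this]
  have rel: "((e, g0 \<otimes>\<^bsub>grp Y (lam B z)\<^esub> g, c), dec z f (lact B z g0 b)) \<in> fib_rel Y B z f" .
  have s2: "(Sx q z (e, g0 \<otimes>\<^bsub>grp Y (lam B z)\<^esub> g, c), Sx q z (dec z f (lact B z g0 b))) \<in> Lr (tgt X f)"
    using step_resp[OF rel z(1,3)] .
  have lzv: "lam B z \<in> gverts Y" using lam_vert[OF z(1)] .
  have pm: "peq Y (lam B z) (lam B z) [LG (lam B z) g0, LG (lam B z) g] [LG (lam B z) (g0 \<otimes>\<^bsub>grp Y (lam B z)\<^esub> g)]"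
    by (rule pmult[OF lzv G(3) fe(4)])
  have wM: "wpath Y (lam B z) (lam B (tgt B e)) (mor Y (lam B e))" using mor_path[OF fe(6)] fe(3) by simp
  have pq: "peq Y dag (lam B (tgt B e)) (q @ [LG (lam B z) g0, LG (lam B z) g] @ mor Y (lam B e))
        (q @ [LG (lam B z) (g0 \<otimes>\<^bsub>grp Y (lam B z)\<^esub> g)] @ mor Y (lam B e))"
    using pctx[OF pm z(3) wM] .
  have rt: "rho B (tgt B e) = tgt X f" using rhoF[OF fe(6)] fe(2) by simp
  have s1: "(stp T f, Sx q z (e, g0 \<otimes>\<^bsub>grp Y (lam B z)\<^esub> g, c)) \<in> Lr (tgt X f)"
    unfolding G stp_simp d' Sx_simp using Lr_peq[OF fe(7) rt fe(9) pq] by simp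
  show ?thesis using Lr_trans[OF s1 s2] unfolding G stp_simp by simp
qed

lemma stp_resp:
  assumes "(T, T') \<in> Lr x" "f \<in> gedges X" "gorg X f = x"
  shows "(stp T f, stp T' f) \<in> Lr (tgt X f)"
  using assms(1)
proof (rule Lr_map)
  fix a assume "a \<in> Ld x" then show "stp a f \<in> Ld (tgt X f)" using stp_dom assms(2,3) by blast
next
  fix a b assume "(a, b) \<in> LR0" "a \<in> Ld x" "b \<in> Ld x"
  then show "(stp a f, stp b f) \<in> Lr (tgt X f)" using stp_base assms(2,3) by blast
qed

lemma walk_resp: "wpath X x w p \<Longrightarrow> (T, T') \<in> Lr x \<Longrightarrow> (walk T p, walk T' p) \<in> Lr w"
proof (induction arbitrary: T T' rule: wpath.induct)
  case (wnil v) then show ?case by simp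
next
  case (wedge f w p)
  have "(stp T f, stp T' f) \<in> Lr (tgt X f)" using stp_resp[OF wedge.prems wedge.hyps(1) refl] .
  then show ?case using wedge.IH by simp
next
  case (welt v g w p)
  have "(act T g, act T' g) \<in> Lr v" using act_resp[OF welt.prems welt.hyps(2)] .
  then show ?case using welt.IH by simp
qed

end

context LF begin

lemma back_lem:
  assumes e: "e \<in> gedges B" "c \<in> bs B e" and wQ: "wpath Y dag (lam B (tgt B e)) Q"
  shows "(stp (tgt B e, Q, bm B (grev B e) (bb B e c)) (grev X (rho B e)),
          (gorg B e, Q @ [LG (lam B (tgt B e)) \<one>\<^bsub>grp Y (lam B (tgt B e))\<^esub>] @ mor Y (lam B (grev B e)), bm B e c))
         \<in> Lr (gorg X (rho B e))"
proof -
  have ec: "e \<in> carr B" using edge_carr[OF e(1)] .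
  define v where "v = tgt B e"
  define f where "f = grev X (rho B e)"
  have re: "rho B e \<in> gedges X" using rho_edge[OF e(1)] .
  have f: "f \<in> gedges X" unfolding f_def using graph_edge(1)[OF gX re] .
  have vv: "v \<in> gverts B" unfolding v_def using graph_edge(4)[OF gB e(1)] .
  have vc: "v \<in> carr B" using vB[OF vv] .
  have gf: "gorg X f = rho B v" unfolding f_def v_def using rhoF[OF ec] unfolding tgt_def by simp
  have tf: "tgt X f = gorg X (rho B e)" unfolding f_def using graph_carr(5)[OF gX edge_carr[OF re]] .
  have ge: "grev B e \<in> gedges B" using graph_edge(1)[OF gB e(1)] .
  have bbc: "bb B e c \<in> bs B (grev B e)" using bb_closed[OF ec e(2)] .
  have a0: "(grev B e, \<one>\<^bsub>grp Y (lam B v)\<^esub>, bb B e c) \<in> fib_dom Y B v f"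
    unfolding fib_dom_mem using ge bbc oneY[OF vc] rhoF[OF ec] unfolding f_def v_def tgt_def by simp
  define cp where "cp = bm B (grev B e) (bb B e c)"
  have cpc: "cp \<in> bs B v" unfolding cp_def v_def using bm_closed[OF revB[OF ec] bbc] unfolding tgt_def .
  have ph0: "phi v (grev B e, \<one>\<^bsub>grp Y (lam B v)\<^esub>, bb B e c) = cp"
    unfolding phi_simp cp_def[symmetric] using bis_facts(3)[OF vc cpc] .
  have d: "dec v f cp \<in> fib_dom Y B v f" "phi v (dec v f cp) = cp" using dec[OF vv f gf cpc] by blast+
  have rel: "(dec v f cp, (grev B e, \<one>\<^bsub>grp Y (lam B v)\<^esub>, bb B e c)) \<in> fib_rel Y B v f"
    using fib_inj[OF vv f gf d(1) a0] d(2) ph0 by simp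
  have sr: "(Sx Q v (dec v f cp), Sx Q v (grev B e, \<one>\<^bsub>grp Y (lam B v)\<^esub>, bb B e c)) \<in> Lr (tgt X f)"
    using step_resp[OF rel vv wQ[folded v_def]] .
  have "Sx Q v (grev B e, \<one>\<^bsub>grp Y (lam B v)\<^esub>, bb B e c) =
     (gorg B e, Q @ [LG (lam B v) \<one>\<^bsub>grp Y (lam B v)\<^esub>] @ mor Y (lam B (grev B e)), bm B e c)"
    unfolding Sx_simp using graph_edge(2)[OF gB e(1)] bb_inv[OF ec e(2)] unfolding tgt_def by simp
  then show ?thesis using sr tf unfolding stp_simp cp_def v_def f_def by simp
qed

lemma cancel:
  assumes e: "e \<in> gedges B" and z: "gorg B e = z" "rho B z = x" "b \<in> bs B z"
    and wq: "wpath Y dag (lam B z) q"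
  shows "((z, q @ mor Y (lam B e) @ [LG (lam B (tgt B e)) \<one>\<^bsub>grp Y (lam B (tgt B e))\<^esub>] @ mor Y (lam B (grev B e)), b),
          (z, q, b)) \<in> Lr x"
proof -
  have ec: "e \<in> carr B" using edge_carr[OF e(1)] .
  note lf = lamF[OF ec]
  have zv: "z \<in> gverts B" using graph_edge(3)[OF gB e] z(1) by simp
  have pc: "peq Y (gorg Y (lam B e)) (gorg Y (lam B e))
    (mor Y (lam B e) @ [LG (tgt Y (lam B e)) \<one>\<^bsub>grp Y (tgt Y (lam B e))\<^esub>] @ mor Y (grev Y (lam B e))) []"
    using peq_cancel[OF Yg] lf by blast
  have wq': "wpath Y dag (gorg Y (lam B e)) q" using wq lf z(1) by simp
  have "peq Y dag (gorg Y (lam B e)) (q @ mor Y (lam B e) @ [LG (tgt Y (lam B e)) \<one>\<^bsub>grp Y (tgt Y (lam B e))\<^esub>] @ mor Y (grev Y (lam B e))) (q @ [])"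
    using peq_left[OF Yg pc wq'] .
  then have "peq Y dag (lam B z) (q @ mor Y (lam B e) @ [LG (lam B (tgt B e)) \<one>\<^bsub>grp Y (lam B (tgt B e))\<^esub>] @ mor Y (lam B (grev B e))) q"
    using lf z(1) by simp
  then show ?thesis using Lr_peq[OF zv z(2,3)] by blast
qed

end

context LF begin

lemma pinv_case:
  assumes x: "x \<in> gedges X" and T: "T \<in> Ld (gorg X x)"
  shows "(walk T [LE x, LE (grev X x)], walk T []) \<in> Lr (gorg X x)"
proof -
  obtain z q b where Tz: "T = (z, q, b)" by (cases T) auto
  have z: "z \<in> gverts B" "rho B z = gorg X x" "wpath Y dag (lam B z) q" "b \<in> bs B z"
    using T Tz Ld_mem by simp_all
  have d: "dec z x b \<in> fib_dom Y B z x" "phi z (dec z x b) = b" using dec_at T Tz x by blast+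
  obtain e g c where d': "dec z x b = (e, g, c)" by (cases "dec z x b") auto
  note fe = fib_e[OF d(1)[unfolded d']]
  define Q where "Q = q @ [LG (lam B z) g] @ mor Y (lam B e)"
  have wQ: "wpath Y dag (lam B (tgt B e)) Q" unfolding Q_def
    using wpath_append[OF z(3) Sx_path[OF d(1)[unfolded d']]] .
  have s1: "walk T [LE x, LE (grev X x)] = stp (tgt B e, Q, bm B (grev B e) (bb B e c)) (grev X x)"
    unfolding Tz by (simp add: stp_simp d' Sx_simp Q_def)
  have r1: "(walk T [LE x, LE (grev X x)],
      (z, (q @ [LG (lam B z) g]) @ mor Y (lam B e) @ [LG (lam B (tgt B e)) \<one>\<^bsub>grp Y (lam B (tgt B e))\<^esub>] @ mor Y (lam B (grev B e)), bm B e c))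
      \<in> Lr (gorg X x)"
    using back_lem[OF fe(1,5) wQ] fe(2,3) unfolding s1 Q_def by simp
  have wq2: "wpath Y dag (lam B z) (q @ [LG (lam B z) g])" using wpath_snoc_LG[OF gY] z(3) fe(4) by simp
  have r2: "((z, (q @ [LG (lam B z) g]) @ mor Y (lam B e) @ [LG (lam B (tgt B e)) \<one>\<^bsub>grp Y (lam B (tgt B e))\<^esub>] @ mor Y (lam B (grev B e)), bm B e c),
          (z, q @ [LG (lam B z) g], bm B e c)) \<in> Lr (gorg X x)"
    using cancel[OF fe(1) fe(3) z(2) fe(10) wq2] .
  have r3: "((z, q @ [LG (lam B z) g], bm B e c), (z, q, lact B z g (bm B e c))) \<in> Lr (gorg X x)"
    using Lr_LG[OF z(1,2,3) fe(4) fe(10)] .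
  have "lact B z g (bm B e c) = b" using d(2) d' phi_simp by simp
  then show ?thesis using Lr_trans[OF Lr_trans[OF r1 r2] r3] fe(3) Tz
    unfolding Q_def by simp
qed

lemma pconj_case:
  assumes x: "x \<in> gedges X" and g: "g \<in> carrier (grp X x)" and T: "T \<in> Ld (gorg X x)"
  shows "(walk T [LG (gorg X x) (hm X x g), LE x], walk T [LE x, LG (tgt X x) (hm X (grev X x) (hb X x g))])
     \<in> Lr (tgt X x)"
proof -
  obtain z q b where Tz: "T = (z, q, b)" by (cases T) auto
  have z: "z \<in> gverts B" "rho B z = gorg X x" "wpath Y dag (lam B z) q" "b \<in> bs B z"
    using T Tz Ld_mem by simp_all
  have zc: "z \<in> carr B" using vB[OF z(1)] .
  have d: "dec z x b \<in> fib_dom Y B z x" "phi z (dec z x b) = b" using dec_at T Tz x by blast+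
  obtain e g1 c where d': "dec z x b = (e, g1, c)" by (cases "dec z x b") auto
  note fe = fib_e[OF d(1)[unfolded d']]
  have xc: "x \<in> carr X" using edge_carr[OF x] .
  have hg: "hm X x g \<in> carrier (grp X (rho B z))" using hom_in_carrier[OF gog_hm[OF Xg xc] g] z(2) by simp
  have T2: "act T (hm X x g) \<in> Ld (gorg X x)" using act_dom[OF T] hg z(2) by simp
  have T2': "act T (hm X x g) = (z, q, ract B z b (hm X x g))" unfolding Tz act_simp ..
  have d2: "dec z x (ract B z b (hm X x g)) \<in> fib_dom Y B z x"
    "phi z (dec z x (ract B z b (hm X x g))) = ract B z b (hm X x g)"
    using dec_at[OF T2[unfolded T2'] x refl] by blast+
  have ge: "g \<in> carrier (grp X (rho B e))" using g fe(2) by simp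
  have cg: "ract B e c g \<in> bs B e" using bis_facts(2)[OF fe(6) ge fe(5)] .
  have a1: "(e, g1, ract B e c g) \<in> fib_dom Y B z x" using fe cg unfolding fib_dom_mem by simp
  have "phi z (e, g1, ract B e c g) = lact B z g1 (ract B z (bm B e c) (hm X x g))"
    unfolding phi_simp using bm_r[OF fe(6) fe(5) ge] fe(2,3) by simp
  also have "\<dots> = ract B z (lact B z g1 (bm B e c)) (hm X x g)"
    using bis_facts(7)[OF zc fe(4) hg fe(10)] .
  also have "\<dots> = ract B z b (hm X x g)" using d(2) d' phi_simp by simp
  finally have "phi z (dec z x (ract B z b (hm X x g))) = phi z (e, g1, ract B e c g)" using d2(2) by simp
  from fib_inj[OF z(1) x z(2)[symmetric] d2(1) a1 this]
  have rel: "(dec z x (ract B z b (hm X x g)), (e, g1, ract B e c g)) \<in> fib_rel Y B z x" .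
  have s1: "(Sx q z (dec z x (ract B z b (hm X x g))), Sx q z (e, g1, ract B e c g)) \<in> Lr (tgt X x)"
    using step_resp[OF rel z(1,3)] .
  have lhs: "walk T [LG (gorg X x) (hm X x g), LE x] = Sx q z (dec z x (ract B z b (hm X x g)))"
    unfolding Tz by (simp add: act_simp stp_simp)
  have ec: "e \<in> carr B" using fe(6) .
  have ge2: "hb X x g \<in> carrier (grp X (rho B (grev B e)))"
    using hom_in_carrier[OF gog_hb[OF Xg xc] g] rhoF[OF ec] fe(2) by simp
  have "bm B (grev B e) (bb B e (ract B e c g)) =
      bm B (grev B e) (ract B (grev B e) (bb B e c) (hb X x g))"
    using bb_r[OF ec fe(5) ge] fe(2) by simp
  also have "\<dots> = ract B (tgt B e) (bm B (grev B e) (bb B e c)) (hm X (grev X x) (hb X x g))"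
    using bm_r[OF revB[OF ec] bb_closed[OF ec fe(5)] ge2] rhoF[OF ec] fe(2) unfolding tgt_def by simp
  finally have eq: "bm B (grev B e) (bb B e (ract B e c g)) =
     ract B (tgt B e) (bm B (grev B e) (bb B e c)) (hm X (grev X x) (hb X x g))" .
  have rhs: "walk T [LE x, LG (tgt X x) (hm X (grev X x) (hb X x g))] = Sx q z (e, g1, ract B e c g)"
    unfolding Tz by (simp add: act_simp stp_simp d' Sx_simp eq)
  show ?thesis using s1 lhs rhs by simp
qed

lemma walk_peq: "peq X a w l r \<Longrightarrow> T \<in> Ld a \<Longrightarrow> (walk T l, walk T r) \<in> Lr w"
proof (induction arbitrary: T rule: peq.induct)
  case (prefl v w p)
  then show ?case using Lr_refl walk_dom by blast
next
  case (psym v w p q)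
  then show ?case using Lr_sym by blast
next
  case (ptrans v w p q r)
  then show ?case using Lr_trans by blast
next
  case (pctx a b l r v u w s)
  have Tu: "walk T u \<in> Ld a" using walk_dom[OF pctx.hyps(2) pctx.prems] .
  have "(walk (walk T u) l, walk (walk T u) r) \<in> Lr b" using pctx.IH[OF Tu] .
  then have "(walk (walk (walk T u) l) s, walk (walk (walk T u) r) s) \<in> Lr w"
    using walk_resp[OF pctx.hyps(3)] by blast
  then show ?case by (simp add: walk_append)
next
  case (pmult v g h)
  obtain z q b where Tz: "T = (z, q, b)" by (cases T) auto
  have z: "z \<in> gverts B" "rho B z = v" "b \<in> bs B z" using pmult.prems Tz Ld_mem by simp_all
  have "ract B z (ract B z b g) h = ract B z b (g \<otimes>\<^bsub>grp X v\<^esub> h)"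
    using bis_facts(6)[OF vB[OF z(1)], of g h b] pmult.hyps z by simp
  moreover have "wpath X v v [LG v (g \<otimes>\<^bsub>grp X v\<^esub> h)]"
    using peq_wpath[OF Xg peq.pmult[OF pmult.hyps]] by simp
  note r = Lr_refl[OF walk_dom[OF this pmult.prems]]
  ultimately show ?case using r unfolding Tz by (simp add: act_simp)
next
  case (pone v)
  obtain z q b where Tz: "T = (z, q, b)" by (cases T) auto
  have z: "z \<in> gverts B" "rho B z = v" "b \<in> bs B z" using pone.prems Tz Ld_mem by simp_all
  have "ract B z b \<one>\<^bsub>grp X v\<^esub> = b"
    using bis_facts(4)[OF vB[OF z(1)] z(3)] z by simp
  then show ?case using Lr_refl[OF pone.prems] unfolding Tz by (simp add: act_simp)
next
  case (pinv x)
  then show ?case using pinv_case by blast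
next
  case (pconj x g)
  then show ?case using pconj_case by blast
qed

end

context LF begin

abbreviation Bd where "Bd st \<equiv> bis_dom Y X B dag st"
abbreviation Br where "Br st \<equiv> bis_rel Y X B dag st"

definition BR0 where
  "BR0 st = {((z, q, b, p), (z, q', b, p)) | z q q' b p. peq Y dag (lam B z) q q'} \<union>
      {((z, q, b, p), (z, q, b, p')) | z q b p p'. peq X (rho B z) st p p'} \<union>
      {((z, q @ [LG (lam B z) g], b, p), (z, q, lact B z g b, p)) | z q g b p.
          g \<in> carrier (grp Y (lam B z))} \<union>
      {((z, q, ract B z b h, p), (z, q, b, LG (rho B z) h # p)) | z q b h p.
          h \<in> carrier (grp X (rho B z))} \<union>
      {((gorg B z, q, bm B z b, p),
        (tgt B z, q @ mor Y (lam B z), bm B (grev B z) (bb B z b), mor X (grev X (rho B z)) @ p))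
         | z q b p. z \<in> gedges B \<and> b \<in> bs B z \<and>
             wpath Y dag (gorg Y (lam B z)) q \<and> wpath X (gorg X (rho B z)) st p}"

lemma Br_def': "Br st = eqc (Bd st) (BR0 st)"
  unfolding bis_rel_def BR0_def ..

lemma Br_equiv: "equiv (Bd st) (Br st)" unfolding Br_def' by (rule eqc_equiv)
lemma Br_base: "(u, u') \<in> BR0 st \<Longrightarrow> u \<in> Bd st \<Longrightarrow> u' \<in> Bd st \<Longrightarrow> (u, u') \<in> Br st"
  unfolding Br_def' by (rule eqc_base)
lemma Br_sym: "(u, u') \<in> Br st \<Longrightarrow> (u', u) \<in> Br st" unfolding Br_def' by (rule eqc_sym)
lemma Br_trans: "(u, u') \<in> Br st \<Longrightarrow> (u', u'') \<in> Br st \<Longrightarrow> (u, u'') \<in> Br st"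
  unfolding Br_def' by (rule eqc_trans)
lemma Br_refl: "u \<in> Bd st \<Longrightarrow> (u, u) \<in> Br st" unfolding Br_def' by (rule eqc_refl)

lemma Bd_mem: "(z, q, b, p) \<in> Bd st \<longleftrightarrow> z \<in> gverts B \<and> wpath Y dag (lam B z) q \<and> b \<in> bs B z \<and>
   wpath X (rho B z) st p"
  unfolding bis_dom_def by simp

lemma BR0E:
  assumes "(u, u') \<in> BR0 st"
  obtains (Q) z q q' b p where "u = (z, q, b, p)" "u' = (z, q', b, p)" "peq Y dag (lam B z) q q'"
  | (P) z q b p p' where "u = (z, q, b, p)" "u' = (z, q, b, p')" "peq X (rho B z) st p p'"
  | (L) z q g b p where "u = (z, q @ [LG (lam B z) g], b, p)" "u' = (z, q, lact B z g b, p)"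
      "g \<in> carrier (grp Y (lam B z))"
  | (R) z q b h p where "u = (z, q, ract B z b h, p)" "u' = (z, q, b, LG (rho B z) h # p)"
      "h \<in> carrier (grp X (rho B z))"
  | (E) z q b p where "u = (gorg B z, q, bm B z b, p)"
      "u' = (tgt B z, q @ mor Y (lam B z), bm B (grev B z) (bb B z b), mor X (grev X (rho B z)) @ p)"
      "z \<in> gedges B" "b \<in> bs B z" "wpath Y dag (gorg Y (lam B z)) q" "wpath X (gorg X (rho B z)) st p"
  using assms unfolding BR0_def
  apply (elim UnE CollectE exE conjE)
  subgoal by (rule that(1)) simp_all
  subgoal by (rule that(2)) simp_all
  subgoal by (rule that(3)) simp_all
  subgoal by (rule that(4)) simp_all
  subgoal by (rule that(5)) simp_all
  done

definition Phi :: "'x \<Rightarrow> ('z \<times> ('y,'g) letter list \<times> 'b \<times> ('x,'h) letter list) \<Rightarrow> _" where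
  "Phi st u = (case u of (z, q, b, p) \<Rightarrow> Lr st `` {walk (z, q, b) p})"

lemma Phi_simp: "Phi st (z, q, b, p) = Lr st `` {walk (z, q, b) p}"
  unfolding Phi_def by simp

lemma cls: "(T, T') \<in> Lr st \<Longrightarrow> Lr st `` {T} = Lr st `` {T'}"
  using equiv_class_eq[OF Lr_equiv] .

lemma Phi_base:
  assumes r: "(u, u') \<in> BR0 st" and ud: "u \<in> Bd st" and ud': "u' \<in> Bd st"
  shows "Phi st u = Phi st u'"
  using r
proof (cases rule: BR0E)
  case (Q z q q' b p)
  have z: "z \<in> gverts B" "b \<in> bs B z" "wpath X (rho B z) st p" using ud Q Bd_mem by simp_all
  have "((z, q, b), (z, q', b)) \<in> Lr (rho B z)" using Lr_peq[OF z(1) refl z(2) Q(3)] .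
  from walk_resp[OF z(3) this] show ?thesis unfolding Q Phi_simp by (rule cls)
next
  case (P z q b p p')
  have z: "(z, q, b) \<in> Ld (rho B z)" using ud P Bd_mem Ld_mem by simp
  from walk_peq[OF P(3) z] show ?thesis unfolding P Phi_simp by (rule cls)
next
  case (L z q g b p)
  have z: "z \<in> gverts B" "b \<in> bs B z" "wpath X (rho B z) st p" "wpath Y dag (lam B z) q"
    using ud ud' L Bd_mem by simp_all
  have "((z, q @ [LG (lam B z) g], b), (z, q, lact B z g b)) \<in> Lr (rho B z)"
    using Lr_LG[OF z(1) refl z(4) L(3) z(2)] .
  from walk_resp[OF z(3) this] show ?thesis unfolding L Phi_simp by (rule cls)
next
  case (R z q b h p)
  show ?thesis unfolding R Phi_simp by (simp add: act_simp)
next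
  case (E z q b p)
  have zc: "z \<in> carr B" using edge_carr[OF E(3)] .
  note lf = lamF[OF zc] and rf = rhoF[OF zc]
  have re: "rho B z \<in> gedges X" using rho_edge[OF E(3)] .
  have mX: "mor X (grev X (rho B z)) = [LE (grev X (rho B z))]"
    unfolding mor_def using graph_edge(1)[OF gX re] by simp
  have wq: "wpath Y dag (lam B (gorg B z)) q" using E(5) lf by simp
  have wQ: "wpath Y dag (lam B (tgt B z)) (q @ mor Y (lam B z))"
    using wpath_append[OF wq mor_path[OF zc]] .
  have r1: "(stp (tgt B z, q @ mor Y (lam B z), bm B (grev B z) (bb B z b)) (grev X (rho B z)),
      (gorg B z, (q @ mor Y (lam B z)) @ [LG (lam B (tgt B z)) \<one>\<^bsub>grp Y (lam B (tgt B z))\<^esub>] @ mor Y (lam B (grev B z)), bm B z b))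
      \<in> Lr (gorg X (rho B z))"
    using back_lem[OF E(3,4) wQ] .
  have r2: "((gorg B z, q @ mor Y (lam B z) @ [LG (lam B (tgt B z)) \<one>\<^bsub>grp Y (lam B (tgt B z))\<^esub>] @ mor Y (lam B (grev B z)), bm B z b),
      (gorg B z, q, bm B z b)) \<in> Lr (gorg X (rho B z))"
    using cancel[OF E(3) refl _ bm_closed[OF zc E(4)] wq] rf by simp
  have r: "(stp (tgt B z, q @ mor Y (lam B z), bm B (grev B z) (bb B z b)) (grev X (rho B z)),
      (gorg B z, q, bm B z b)) \<in> Lr (gorg X (rho B z))"
    using Lr_trans[OF r1[unfolded append_assoc] r2] by simp
  have "(walk (stp (tgt B z, q @ mor Y (lam B z), bm B (grev B z) (bb B z b)) (grev X (rho B z))) p,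
      walk (gorg B z, q, bm B z b) p) \<in> Lr st"
    using walk_resp[OF E(6) r] .
  then show ?thesis unfolding E Phi_simp mX using cls by (simp add: Lr_sym)
qed

lemma Phi_inv: "(u, u') \<in> Br st \<Longrightarrow> Phi st u = Phi st u'"
proof -
  assume "(u, u') \<in> Br st"
  then have "(u, u') \<in> eqc (Bd st) (BR0 st)" unfolding Br_def' .
  then show ?thesis
  proof (rule eqc_inv)
    fix a b assume "(a, b) \<in> BR0 st" "a \<in> Bd st" "b \<in> Bd st"
    then show "Phi st a = Phi st b" by (rule Phi_base)
  qed
qed

lemma surj_walk:
  assumes "st \<in> gverts X"
  shows "wpath X x st p \<Longrightarrow> (z, q, b) \<in> Ld x \<Longrightarrow>
     ((z, q, b, p), (case walk (z, q, b) p of (z', q', b') \<Rightarrow> (z', q', b', []))) \<in> Br st"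
proof (induction arbitrary: z q b rule: wpath.induct)
  case (wnil v)
  have "(z, q, b, []) \<in> Bd v" using wnil Ld_mem Bd_mem wpath.wnil by auto
  then show ?case using Br_refl by simp
next
  case (welt v g w p)
  have z: "z \<in> gverts B" "rho B z = v" "wpath Y dag (lam B z) q" "b \<in> bs B z" using welt.prems Ld_mem by simp_all
  have rb: "ract B z b g \<in> bs B z" using bis_facts(2)[OF vB[OF z(1)]] welt.hyps(2) z by simp
  have T2: "(z, q, ract B z b g) \<in> Ld v" using z rb Ld_mem by simp
  have ih: "((z, q, ract B z b g, p), (case walk (z, q, ract B z b g) p of (z', q', b') \<Rightarrow> (z', q', b', []))) \<in> Br w"
    using welt.IH[OF T2] .
  have "((z, q, ract B z b g, p), (z, q, b, LG (rho B z) g # p)) \<in> BR0 w"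
    unfolding BR0_def using welt.hyps(2) z(2) by blast
  moreover have "(z, q, ract B z b g, p) \<in> Bd w" using z rb welt.hyps(3) Bd_mem by simp
  moreover have "(z, q, b, LG (rho B z) g # p) \<in> Bd w"
    using z welt.hyps Bd_mem wpath.welt by simp
  ultimately have "((z, q, b, LG v g # p), (z, q, ract B z b g, p)) \<in> Br w"
    using Br_sym[OF Br_base] z(2) by simp
  from Br_trans[OF this ih] show ?case by (simp add: act_simp)
next
  case (wedge f w p)
  have z: "z \<in> gverts B" "rho B z = gorg X f" "wpath Y dag (lam B z) q" "b \<in> bs B z"
    using wedge.prems Ld_mem by simp_all
  have d: "dec z f b \<in> fib_dom Y B z f" "phi z (dec z f b) = b" using dec_at wedge.prems wedge.hyps(1) by blast+
  obtain e g c where d': "dec z f b = (e, g, c)" by (cases "dec z f b") auto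
  note fe = fib_e[OF d(1)[unfolded d']]
  have lb: "lact B z g (bm B e c) = b" using d(2) d' phi_simp by simp
  have ec: "e \<in> carr B" using fe(6) .
  note lf = lamF[OF ec] and rf = rhoF[OF ec]
  have ff: "f \<in> carr X" using edge_carr[OF wedge.hyps(1)] .
  have fr: "grev X f \<in> gedges X" using graph_edge(1)[OF gX wedge.hyps(1)] .
  have wfp: "wpath X (gorg X f) w (LE f # p)" using wpath.wedge[OF wedge.hyps] .
  have wq2: "wpath Y dag (lam B z) (q @ [LG (lam B z) g])" using wpath_snoc_LG[OF gY] z(3) fe(4) by simp
  define u0 where "u0 = (z, q, b, LE f # p)"
  define u1 where "u1 = (z, q @ [LG (lam B z) g], bm B e c, LE f # p)"
  define Q where "Q = q @ [LG (lam B z) g] @ mor Y (lam B e)"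
  define cp where "cp = bm B (grev B e) (bb B e c)"
  define u2 where "u2 = (tgt B e, Q, cp, [LE (grev X f), LE f] @ p)"
  define u3 where "u3 = (tgt B e, Q, cp, p)"
  have wQ: "wpath Y dag (lam B (tgt B e)) Q" unfolding Q_def
    using wpath_append[OF z(3) Sx_path[OF d(1)[unfolded d']]] .
  have rt: "rho B (tgt B e) = tgt X f" using rf fe(2) by simp
  have wp: "wpath X (tgt X f) w p" using wedge.hyps(2) .
  have wp2: "wpath X (tgt X f) w ([LE (grev X f), LE f] @ p)"
  proof -
    have "wpath X (tgt X f) (tgt X f) [LE (grev X f), LE f]"
      using graph_edge[OF gX wedge.hyps(1)] graph_edge[OF gX fr] fr wedge.hyps(1)
      by (auto intro!: wpath.intros simp: tgt_def)
    then show ?thesis using wpath_append[OF _ wp] by blast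
  qed
  have d0: "u0 \<in> Bd w" unfolding u0_def using z wfp Bd_mem by simp
  have d1: "u1 \<in> Bd w" unfolding u1_def using z wfp wq2 fe(10) Bd_mem by simp
  have d2: "u2 \<in> Bd w" unfolding u2_def using fe(7) wQ fe(9)[folded cp_def] wp2 rt Bd_mem by simp
  have d3: "u3 \<in> Bd w" unfolding u3_def using fe(7) wQ fe(9)[folded cp_def] wp rt Bd_mem by simp
  have b1: "(u1, u0) \<in> BR0 w" unfolding BR0_def u0_def u1_def using fe(4) lb by blast
  have wq2': "wpath Y dag (gorg Y (lam B e)) (q @ [LG (lam B z) g])" using wq2 lf fe(3) by simp
  have wfp': "wpath X (gorg X (rho B e)) w (LE f # p)" using wfp fe(2) by simp
  have mXe: "mor X (grev X (rho B e)) = [LE (grev X f)]" unfolding mor_def using fr fe(2) by simp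
  have "((gorg B e, q @ [LG (lam B z) g], bm B e c, LE f # p),
        (tgt B e, (q @ [LG (lam B z) g]) @ mor Y (lam B e), bm B (grev B e) (bb B e c), mor X (grev X (rho B e)) @ (LE f # p)))
        \<in> BR0 w"
    unfolding BR0_def using fe(1,5) wq2' wfp' by blast
  then have b2: "(u1, u2) \<in> BR0 w" unfolding u1_def u2_def Q_def cp_def mXe using fe(3) by simp
  have pinvf: "peq X (gorg X (grev X f)) (gorg X (grev X f)) [LE (grev X f), LE (grev X (grev X f))] []"
    by (rule pinv[OF fr])
  have pq: "peq X (tgt X f) w ([LE (grev X f), LE f] @ p) ([] @ p)"
    using peq_right[OF Xg pinvf[unfolded graph_edge(2)[OF gX wedge.hyps(1)]]] wp unfolding tgt_def by blast
  have b3: "(u2, u3) \<in> BR0 w" unfolding BR0_def u2_def u3_def using pq rt by simp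
  have chain: "(u0, u3) \<in> Br w"
    using Br_trans[OF Br_trans[OF Br_sym[OF Br_base[OF b1 d1 d0]] Br_base[OF b2 d1 d2]] Br_base[OF b3 d2 d3]] .
  have st: "stp (z, q, b) f = (tgt B e, Q, cp)" unfolding stp_simp d' Sx_simp Q_def cp_def ..
  have T3: "(tgt B e, Q, cp) \<in> Ld (tgt X f)" using stp_dom[OF wedge.prems wedge.hyps(1) refl] st by simp
  have ih: "(u3, (case walk (tgt B e, Q, cp) p of (z', q', b') \<Rightarrow> (z', q', b', []))) \<in> Br w"
    unfolding u3_def using wedge.IH[OF T3] .
  show ?case using Br_trans[OF chain ih] st unfolding u0_def by simp
qed

end

context LF begin

lemma BR0_Q: "peq Y dag (lam B z) q q' \<Longrightarrow> ((z, q, b, p), (z, q', b, p)) \<in> BR0 st"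
  unfolding BR0_def by simp
lemma BR0_P: "peq X (rho B z) st p p' \<Longrightarrow> ((z, q, b, p), (z, q, b, p')) \<in> BR0 st"
  unfolding BR0_def by simp
lemma BR0_L: "g \<in> carrier (grp Y (lam B z)) \<Longrightarrow> ((z, q @ [LG (lam B z) g], b, p), (z, q, lact B z g b, p)) \<in> BR0 st"
  unfolding BR0_def by simp
lemma BR0_R: "h \<in> carrier (grp X (rho B z)) \<Longrightarrow> ((z, q, ract B z b h, p), (z, q, b, LG (rho B z) h # p)) \<in> BR0 st"
  unfolding BR0_def by simp
lemma BR0_E: "z \<in> gedges B \<Longrightarrow> b \<in> bs B z \<Longrightarrow> wpath Y dag (gorg Y (lam B z)) q \<Longrightarrow> wpath X (gorg X (rho B z)) st p \<Longrightarrow>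
   ((gorg B z, q, bm B z b, p),
        (tgt B z, q @ mor Y (lam B z), bm B (grev B z) (bb B z b), mor X (grev X (rho B z)) @ p)) \<in> BR0 st"
  unfolding BR0_def
  apply (rule UnI2)
  apply (simp only: mem_Collect_eq)
  apply (rule exI[of _ z], rule exI[of _ q], rule exI[of _ b], rule exI[of _ p])
  by simp

definition emb :: "('z \<times> ('y,'g) letter list \<times> 'b) \<Rightarrow> ('z \<times> ('y,'g) letter list \<times> 'b \<times> ('x,'h) letter list)" where
  "emb = (\<lambda>(z, q, b). (z, q, b, []))"

lemma emb_simp: "emb (z, q, b) = (z, q, b, [])" unfolding emb_def by simp

lemma emb_dom: "st \<in> gverts X \<Longrightarrow> a \<in> Ld st \<Longrightarrow> emb a \<in> Bd st"
  unfolding emb_def by (cases a) (auto simp: Ld_mem Bd_mem intro: wpath.wnil)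

lemma emb_resp:
  assumes "(T, T') \<in> Lr st" "st \<in> gverts X"
  shows "(emb T, emb T') \<in> Br st"
proof -
  have "(T, T') \<in> eqc (Ld st) LR0" using assms(1) unfolding Lr_def' .
  then have "(emb T, emb T') \<in> eqc (Bd st) (BR0 st)"
  proof (rule eqc_map)
    fix a assume "a \<in> Ld st" then show "emb a \<in> Bd st" using emb_dom assms(2) by blast
  next
    fix a b assume r: "(a, b) \<in> LR0" and ad: "a \<in> Ld st" and bd: "b \<in> Ld st"
    have ed: "emb a \<in> Bd st" "emb b \<in> Bd st" using emb_dom assms(2) ad bd by blast+
    from r have "(emb a, emb b) \<in> BR0 st"
    proof (cases rule: LR0E)
      case (P z q q' b0) then show ?thesis unfolding P emb_simp by (intro BR0_Q)
    next
      case (G z q g b0) then show ?thesis unfolding G emb_simp by (intro BR0_L)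
    qed
    then show "(emb a, emb b) \<in> eqc (Bd st) (BR0 st)" using ed by (rule eqc_base)
  qed
  then show ?thesis unfolding Br_def' .
qed

definition pre :: "('y,'g) letter list \<Rightarrow> ('z \<times> ('y,'g) letter list \<times> 'b) \<Rightarrow> ('z \<times> ('y,'g) letter list \<times> 'b)" where
  "pre r = (\<lambda>(z, q, b). (z, r @ q, b))"

definition pre4 :: "('y,'g) letter list \<Rightarrow> ('z \<times> ('y,'g) letter list \<times> 'b \<times> ('x,'h) letter list) \<Rightarrow> _" where
  "pre4 r = (\<lambda>(z, q, b, p). (z, r @ q, b, p))"

lemma pre_simp: "pre r (z, q, b) = (z, r @ q, b)" unfolding pre_def by simp
lemma pre4_simp: "pre4 r (z, q, b, p) = (z, r @ q, b, p)" unfolding pre4_def by simp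

lemma pre_dom: "wpath Y dag dag r \<Longrightarrow> a \<in> Ld x \<Longrightarrow> pre r a \<in> Ld x"
  unfolding pre_def by (cases a) (auto simp: Ld_mem intro: wpath_append)

lemma pre4_dom: "wpath Y dag dag r \<Longrightarrow> a \<in> Bd x \<Longrightarrow> pre4 r a \<in> Bd x"
  unfolding pre4_def by (cases a) (auto simp: Bd_mem intro: wpath_append)

lemma pre_resp:
  assumes "(T, T') \<in> Lr x" "wpath Y dag dag r"
  shows "(pre r T, pre r T') \<in> Lr x"
  using assms(1)
proof (rule Lr_map)
  fix a assume "a \<in> Ld x" then show "pre r a \<in> Ld x" using pre_dom assms(2) by blast
next
  fix a b assume r: "(a, b) \<in> LR0" and ad: "a \<in> Ld x" and bd: "b \<in> Ld x"
  from r show "(pre r a, pre r b) \<in> Lr x"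
  proof (cases rule: LR0E)
    case (P z q q' b0)
    have z: "z \<in> gverts B" "rho B z = x" "b0 \<in> bs B z" using ad P Ld_mem by simp_all
    have "peq Y dag (lam B z) (r @ q) (r @ q')" using peq_left[OF Yg P(3) assms(2)] .
    then show ?thesis unfolding P pre_simp using Lr_peq[OF z] by simp
  next
    case (G z q g b0)
    have z: "z \<in> gverts B" "rho B z = x" "b0 \<in> bs B z" "wpath Y dag (lam B z) q" using ad bd G Ld_mem by simp_all
    have "wpath Y dag (lam B z) (r @ q)" using wpath_append[OF assms(2) z(4)] .
    from Lr_LG[OF z(1,2) this G(3) z(3)] show ?thesis unfolding G pre_simp by simp
  qed
qed

lemma pre4_resp:
  assumes "(u, u') \<in> Br st" "wpath Y dag dag r"
  shows "(pre4 r u, pre4 r u') \<in> Br st"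
proof -
  have "(u, u') \<in> eqc (Bd st) (BR0 st)" using assms(1) unfolding Br_def' .
  then have "(pre4 r u, pre4 r u') \<in> eqc (Bd st) (BR0 st)"
  proof (rule eqc_map)
    fix a assume "a \<in> Bd st" then show "pre4 r a \<in> Bd st" using pre4_dom assms(2) by blast
  next
    fix a b assume rr: "(a, b) \<in> BR0 st" and ad: "a \<in> Bd st" and bd: "b \<in> Bd st"
    have ed: "pre4 r a \<in> Bd st" "pre4 r b \<in> Bd st" using pre4_dom assms(2) ad bd by blast+
    from rr have "(pre4 r a, pre4 r b) \<in> BR0 st"
    proof (cases rule: BR0E)
      case (Q z q q' b p)
      have "peq Y dag (lam B z) (r @ q) (r @ q')" using peq_left[OF Yg Q(3) assms(2)] .
      then show ?thesis unfolding Q pre4_simp by (rule BR0_Q)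
    next
      case (P z q b p p')
      then show ?thesis unfolding P pre4_simp by (intro BR0_P)
    next
      case (L z q g b p)
      have "(z, r @ q @ [LG (lam B z) g], b, p) = (z, (r @ q) @ [LG (lam B z) g], b, p)" by simp
      then show ?thesis unfolding L pre4_simp using BR0_L[OF L(3), of "r @ q"] by simp
    next
      case (R z q b h p)
      then show ?thesis unfolding R pre4_simp by (intro BR0_R)
    next
      case (E z q b p)
      have w: "wpath Y dag (gorg Y (lam B z)) (r @ q)" using wpath_append[OF assms(2) E(5)] .
      have "(tgt B z, r @ q @ mor Y (lam B z), bm B (grev B z) (bb B z b), mor X (grev X (rho B z)) @ p) =
          (tgt B z, (r @ q) @ mor Y (lam B z), bm B (grev B z) (bb B z b), mor X (grev X (rho B z)) @ p)" by simp
      then show ?thesis unfolding E pre4_simp using BR0_E[OF E(3,4) w E(6)] by simp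
    qed
    then show "(pre4 r a, pre4 r b) \<in> eqc (Bd st) (BR0 st)" using ed by (rule eqc_base)
  qed
  then show ?thesis unfolding Br_def' .
qed

lemma natmap_cls:
  assumes "st \<in> gverts X" "x \<in> Ld st"
  shows "natmap Y X B dag st (Lr st `` {x}) = Br st `` {emb x}"
  unfolding natmap_def emb_def[symmetric]
  using class_image[where f=emb, OF Lr_equiv Br_equiv assms(2) emb_dom[OF assms] emb_resp[OF _ assms(1)]] .

lemma lhs_act_cls:
  assumes "wpath Y dag dag r" "x \<in> Ld st"
  shows "lhs_act Y X B dag st r (Lr st `` {x}) = Lr st `` {pre r x}"
  unfolding lhs_act_def pre_def[symmetric]
  using class_image[where f="pre r", OF Lr_equiv Lr_equiv assms(2) pre_dom[OF assms] pre_resp[OF _ assms(1)]] .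

lemma bis_act_cls:
  assumes "wpath Y dag dag r" "u \<in> Bd st"
  shows "bis_act Y X B dag st r (Br st `` {u}) = Br st `` {pre4 r u}"
  unfolding bis_act_def pre4_def[symmetric]
  using class_image[where f="pre4 r", OF Br_equiv Br_equiv assms(2) pre4_dom[OF assms] pre4_resp[OF _ assms(1)]] .

lemma main:
  assumes st: "st \<in> gverts X"
  shows "bij_betw (natmap Y X B dag st) (lhs_set Y X B dag st) (pi1B Y X B dag st) \<and>
         (\<forall>r. wpath Y dag dag r \<longrightarrow> (\<forall>C\<in>lhs_set Y X B dag st.
            natmap Y X B dag st (lhs_act Y X B dag st r C) = bis_act Y X B dag st r (natmap Y X B dag st C)))"
proof (intro conjI allI impI ballI)
  have ls: "lhs_set Y X B dag st = Ld st // Lr st" unfolding lhs_set_def ..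
  have ps: "pi1B Y X B dag st = Bd st // Br st" unfolding pi1B_def ..
  show "bij_betw (natmap Y X B dag st) (lhs_set Y X B dag st) (pi1B Y X B dag st)"
    unfolding ls ps bij_betw_def
  proof (intro conjI)
    show "inj_on (natmap Y X B dag st) (Ld st // Lr st)"
    proof (rule inj_onI)
      fix C1 C2 assume c1: "C1 \<in> Ld st // Lr st" and c2: "C2 \<in> Ld st // Lr st"
        and eq: "natmap Y X B dag st C1 = natmap Y X B dag st C2"
      from c1 obtain x1 where x1: "C1 = Lr st `` {x1}" "x1 \<in> Ld st" by (rule quotientE)
      from c2 obtain x2 where x2: "C2 = Lr st `` {x2}" "x2 \<in> Ld st" by (rule quotientE)
      have "Br st `` {emb x1} = Br st `` {emb x2}"
        using eq natmap_cls[OF st x1(2)] natmap_cls[OF st x2(2)] x1(1) x2(1) by simp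
      then have "(emb x1, emb x2) \<in> Br st"
        using eq_equiv_class_iff[OF Br_equiv emb_dom[OF st x1(2)] emb_dom[OF st x2(2)]] by simp
      then have "Phi st (emb x1) = Phi st (emb x2)" by (rule Phi_inv)
      then show "C1 = C2" using x1(1) x2(1) unfolding emb_def
        by (cases x1, cases x2) (simp add: Phi_simp)
    qed
    show "natmap Y X B dag st ` (Ld st // Lr st) = Bd st // Br st"
    proof
      show "natmap Y X B dag st ` (Ld st // Lr st) \<subseteq> Bd st // Br st"
      proof
        fix D assume "D \<in> natmap Y X B dag st ` (Ld st // Lr st)"
        then obtain C where C: "C \<in> Ld st // Lr st" "D = natmap Y X B dag st C" by blast
        from C(1) obtain x where x: "C = Lr st `` {x}" "x \<in> Ld st" by (rule quotientE)
        show "D \<in> Bd st // Br st" using C(2) x natmap_cls[OF st x(2)] quotientI[OF emb_dom[OF st x(2)]] by simp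
      qed
      show "Bd st // Br st \<subseteq> natmap Y X B dag st ` (Ld st // Lr st)"
      proof
        fix D assume "D \<in> Bd st // Br st"
        then obtain u where u: "D = Br st `` {u}" "u \<in> Bd st" by (rule quotientE)
        obtain z q b p where up: "u = (z, q, b, p)" by (cases u) auto
        have T: "(z, q, b) \<in> Ld (rho B z)" "wpath X (rho B z) st p" using u(2) up Bd_mem Ld_mem by simp_all
        have wd: "walk (z, q, b) p \<in> Ld st" using walk_dom[OF T(2,1)] .
        have rel: "(u, emb (walk (z, q, b) p)) \<in> Br st"
          using surj_walk[OF st T(2,1)] up unfolding emb_def by (simp add: case_prod_beta)
        have "D = Br st `` {emb (walk (z, q, b) p)}"
          using equiv_class_eq[OF Br_equiv rel] u(1) by simp
        also have "\<dots> = natmap Y X B dag st (Lr st `` {walk (z, q, b) p})"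
          using natmap_cls[OF st wd] by simp
        finally show "D \<in> natmap Y X B dag st ` (Ld st // Lr st)" using quotientI[OF wd] by blast
      qed
    qed
  qed
next
  fix r C assume r: "wpath Y dag dag r" and C: "C \<in> lhs_set Y X B dag st"
  from C obtain x where x: "C = Lr st `` {x}" "x \<in> Ld st" unfolding lhs_set_def by (rule quotientE)
  have "natmap Y X B dag st (lhs_act Y X B dag st r C) = Br st `` {emb (pre r x)}"
    using lhs_act_cls[OF r x(2)] natmap_cls[OF st pre_dom[OF r x(2)]] x(1) by simp
  also have "emb (pre r x) = pre4 r (emb x)" unfolding emb_def pre_def pre4_def by (cases x) simp
  also have "Br st `` {pre4 r (emb x)} = bis_act Y X B dag st r (natmap Y X B dag st C)"
    using bis_act_cls[OF r emb_dom[OF st x(2)]] natmap_cls[OF st x(2)] x(1) by simp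
  finally show "natmap Y X B dag st (lhs_act Y X B dag st r C) = bis_act Y X B dag st r (natmap Y X B dag st C)" .
qed

end

theorem mainTheorem2:
  fixes Y :: "('y,'g) gog" and X :: "('x,'h) gog" and B :: "('z,'y,'x,'g,'h,'b) gobs"
    and dag :: 'y and st :: 'x
  assumes "is_gog Y" and "is_gog X" and "is_gobs Y X B" and "left_fibrant Y X B"
    and "dag \<in> gverts Y" and "st \<in> gverts X"
  shows "bij_betw (natmap Y X B dag st) (lhs_set Y X B dag st) (pi1B Y X B dag st) \<and>
         (\<forall>r. wpath Y dag dag r \<longrightarrow> (\<forall>C\<in>lhs_set Y X B dag st.
            natmap Y X B dag st (lhs_act Y X B dag st r C) = bis_act Y X B dag st r (natmap Y X B dag st C)))"
proof -
  interpret LF Y X B dag using assms(1-5) by unfold_locales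
  show ?thesis using main[OF assms(6)] .
qed


end
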